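(* Let $f,g:[a;b]\to\mathbb{R}$ be two regulated functions which have no common points of discontinuity. Let $\eta_0\ge\eta_1\ge\ldots$ and $\theta_0\ge\theta_1\ge\ldots$ be two sequences of non-negative numbers such that $\eta_k\downarrow0$ and $\theta_k\downarrow0$ as $k\to+\infty$. Define $\eta_{-1}:=\sup_{a\le t\le b}|f(t)-f(a)|$ and \[ S:=\sum_{k=0}^{+\infty}2^{k}\eta_{k-1}\cdot TV(g,[a;b],\theta_k)+\sum_{k=0}^{+\infty}2^{k}\theta_k\cdot TV(f,[a;b],\eta_k). \] If $S<+\infty$, then the Riemann–Stieltjes integral $\int_a^b f\,\mathrm{d}g$ exists and \[ \left|\int_a^b f\,\mathrm{d}g-f(a)\left[g(b)-g(a)\right]\right|\le S. \]
   Context: A function $h:[a;b]\to\mathbb{R}$ is regulated if the one-sided finite limits $\lim_{t\to a+}h(t)$, $\lim_{t\to b-}h(t)$ exist and, for every $x\in(a;b)$, both finite limits $\lim_{t\to x-}h(t)$ and $\lim_{t\to x+}h(t)$ exist. The total variation is $TV(h,[a;b],0)=\sup_n\sup_{a\le t_1<\dots<t_n\le b}\sum_{i=2}^{n}|h(t_i)-h(t_{i-1})|$. For $\delta\ge0$, the truncated variation is $TV(h,[a;b],\delta):=\inf\{TV(u,[a;b],0):\sup_{a\le t\le b}|h(t)-u(t)|\le\delta/2\}$; for regulated $h$ and $\delta>0$ it equals $\sup_n\sup_{a\le t_1<\dots<t_n\le b}\sum_{i=2}^{n}\max\{|h(t_i)-h(t_{i-1})|-\delta,0\}$. The Riemann–Stieltjes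 integral $\int_a^b f\,\mathrm{d}g$ exists if the sums $\sum_i f(\nu_i)[g(a_i)-g(a_{i-1})]$ over partitions $a=a_0<\dots<a_l=b$ with tags $\nu_i\in[a_{i-1};a_i]$ converge to a common limit as the mesh $\max_i(a_i-a_{i-1})\to0$, independently of the choice of tags. *)

theory Defs
  imports "HOL-Analysis.Analysis"
begin

definition regulated :: "(real \<Rightarrow> real) \<Rightarrow> real \<Rightarrow> real \<Rightarrow> bool" where
  "regulated h a b \<longleftrightarrow>
     (\<exists>L. (h \<longlongrightarrow> L) (at_right a)) \<and> (\<exists>L. (h \<longlongrightarrow> L) (at_left b)) \<and>
     (\<forall>x\<in>{a<..<b}. (\<exists>L. (h \<longlongrightarrow> L) (at_left x)) \<and> (\<exists>L. (h \<longlongrightarrow> L) (at_right x)))"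

definition total_variation :: "(real \<Rightarrow> real) \<Rightarrow> real \<Rightarrow> real \<Rightarrow> ereal" where
  "total_variation h a b =
     Sup {ereal (\<Sum>i<n - 1. \<bar>h (t (Suc i)) - h (t i)\<bar>) | n t.
            (\<forall>i<n. a \<le> t i \<and> t i \<le> b) \<and> (\<forall>i. Suc i < n \<longrightarrow> t i < t (Suc i))}"

definition truncated_variation :: "(real \<Rightarrow> real) \<Rightarrow> real \<Rightarrow> real \<Rightarrow> real \<Rightarrow> ereal" where
  "truncated_variation h a b \<delta> =
     (INF u \<in> {u. \<forall>t\<in>{a..b}. \<bar>h t - u t\<bar> \<le> \<delta> / 2}. total_variation u a b)"

definition RS_has_integral :: "(real \<Rightarrow> real) \<Rightarrow> (real \<Rightarrow> real) \<Rightarrow> real \<Rightarrow> real \<Rightarrow> real \<Rightarrow> bool" where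
  "RS_has_integral f g a b I \<longleftrightarrow>
     (\<forall>\<epsilon>>0. \<exists>\<delta>>0. \<forall>(l::nat) (x::nat \<Rightarrow> real) (\<nu>::nat \<Rightarrow> real).
        x 0 = a \<and> x l = b \<and> (\<forall>i<l. x i < x (Suc i) \<and> x (Suc i) - x i < \<delta>) \<and>
        (\<forall>i<l. x i \<le> \<nu> i \<and> \<nu> i \<le> x (Suc i)) \<longrightarrow>
        \<bar>(\<Sum>i<l. f (\<nu> i) * (g (x (Suc i)) - g (x i))) - I\<bar> < \<epsilon>)"

end

theory Submission
  imports Defs
begin
lemma tv_upper:
  assumes "\<forall>i<n. c \<le> t i \<and> t i \<le> d" "\<forall>i. Suc i < n \<longrightarrow> t i < t (Suc i)"
  shows "ereal (\<Sum>i<n - 1. \<bar>h (t (Suc i)) - h (t i)\<bar>) \<le> total_variation h c d"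
  unfolding total_variation_def
  by (rule Sup_upper) (use assms in blast)

lemma tv_nonneg: "0 \<le> total_variation h c d"
proof -
  have "ereal (\<Sum>i<0 - 1. \<bar>h ((\<lambda>_. c) (Suc i)) - h ((\<lambda>_. c) i)\<bar>) \<le> total_variation h c d"
    by (rule tv_upper) auto
  thus ?thesis by (simp add: zero_ereal_def)
qed

lemma tv_least:
  assumes "\<And>n t. \<forall>i<n. c \<le> t i \<and> t i \<le> d \<Longrightarrow> \<forall>i. Suc i < n \<longrightarrow> t i < t (Suc i)
     \<Longrightarrow> ereal (\<Sum>i<n - 1. \<bar>h (t (Suc i)) - h (t i)\<bar>) \<le> B"
  shows "total_variation h c d \<le> B"
  unfolding total_variation_def
  by (rule Sup_least) (use assms in blast)

lemma strictify:
  fixes h :: "real \<Rightarrow> real"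
  assumes "1 \<le> n" "\<forall>i<n. c \<le> t i \<and> t i \<le> d" "\<forall>i. Suc i < n \<longrightarrow> t i \<le> t (Suc i)"
  shows "\<exists>m s. 1 \<le> m \<and> (\<forall>i<m. c \<le> s i \<and> s i \<le> d) \<and> (\<forall>i. Suc i < m \<longrightarrow> s i < s (Suc i))
     \<and> s (m - 1) = t (n - 1)
     \<and> (\<Sum>i<m - 1. \<bar>h (s (Suc i)) - h (s i)\<bar>) = (\<Sum>i<n - 1. \<bar>h (t (Suc i)) - h (t i)\<bar>)"
  using assms
proof (induction n rule: nat_induct_at_least)
  case base
  show ?case by (rule exI[of _ 1], rule exI[of _ t]) (use base in simp)
next
  case (Suc n)
  have p1: "\<forall>i<n. c \<le> t i \<and> t i \<le> d" using Suc.prems(1) by simp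
  have p2: "\<forall>i. Suc i < n \<longrightarrow> t i \<le> t (Suc i)" using Suc.prems(2) by simp
  obtain m s where ms: "1 \<le> m" "\<forall>i<m. c \<le> s i \<and> s i \<le> d" "\<forall>i. Suc i < m \<longrightarrow> s i < s (Suc i)"
     "s (m - 1) = t (n - 1)"
     "(\<Sum>i<m - 1. \<bar>h (s (Suc i)) - h (s i)\<bar>) = (\<Sum>i<n - 1. \<bar>h (t (Suc i)) - h (t i)\<bar>)"
    using Suc.IH[OF p1 p2] by blast
  obtain k where nk: "n = Suc k" using Suc.hyps by (cases n) auto
  have sumn: "(\<Sum>i<Suc n - 1. \<bar>h (t (Suc i)) - h (t i)\<bar>) =
      (\<Sum>i<n - 1. \<bar>h (t (Suc i)) - h (t i)\<bar>) + \<bar>h (t n) - h (t (n - 1))\<bar>"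
    using nk by simp
  show ?case
  proof (cases "t n = t (n - 1)")
    case True
    have z: "\<bar>h (t n) - h (t (n - 1))\<bar> = 0" using True by simp
    have sumn': "(\<Sum>i<Suc n - 1. \<bar>h (t (Suc i)) - h (t i)\<bar>) = (\<Sum>i<n - 1. \<bar>h (t (Suc i)) - h (t i)\<bar>)"
      using sumn z by simp
    have last: "s (m - 1) = t (Suc n - 1)" using ms(4) True by simp
    show ?thesis
      by (rule exI[of _ m], rule exI[of _ s], intro conjI) (fact ms(1), fact ms(2), fact ms(3), fact last,
          simp only: ms(5) sumn')
  next
    case False
    have le: "t (n - 1) \<le> t n" using Suc.prems(2) nk by simp
    hence lt: "t (n - 1) < t n" using False by simp
    define s' where "s' = s(m := t n)"
    obtain m' where mm: "m = Suc m'" using ms(1) by (cases m) auto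
    have s1: "(\<Sum>i<Suc m - 1. \<bar>h (s' (Suc i)) - h (s' i)\<bar>) =
       (\<Sum>i<m - 1. \<bar>h (s (Suc i)) - h (s i)\<bar>) + \<bar>h (t n) - h (s (m - 1))\<bar>"
    proof -
      have "(\<Sum>i<Suc m - 1. \<bar>h (s' (Suc i)) - h (s' i)\<bar>) =
          (\<Sum>i<m - 1. \<bar>h (s' (Suc i)) - h (s' i)\<bar>) + \<bar>h (s' m) - h (s' (m - 1))\<bar>"
        using mm by simp
      also have "(\<Sum>i<m - 1. \<bar>h (s' (Suc i)) - h (s' i)\<bar>) = (\<Sum>i<m - 1. \<bar>h (s (Suc i)) - h (s i)\<bar>)"
        by (rule sum.cong) (simp_all add: s'_def mm)
      finally show ?thesis using mm by (simp add: s'_def)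
    qed
    show ?thesis
    proof (rule exI[of _ "Suc m"], rule exI[of _ s'], intro conjI)
      show "\<forall>i<Suc m. c \<le> s' i \<and> s' i \<le> d"
      proof (intro allI impI)
        fix i assume "i < Suc m"
        thus "c \<le> s' i \<and> s' i \<le> d" using ms(2) Suc.prems(1) by (cases "i = m") (simp_all add: s'_def)
      qed
      show "\<forall>i. Suc i < Suc m \<longrightarrow> s' i < s' (Suc i)"
      proof (intro allI impI)
        fix i assume "Suc i < Suc m"
        then consider "Suc i < m" | "Suc i = m" by linarith
        then show "s' i < s' (Suc i)"
        proof cases
          case 1 thus ?thesis using ms(3) by (simp add: s'_def)
        next
          case 2
          hence "i = m - 1" by simp
          thus ?thesis using ms(4) lt 2 by (simp add: s'_def)
        qed
      qed
      show "s' (Suc m - 1) = t (Suc n - 1)" by (simp add: s'_def)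
      show "(\<Sum>i<Suc m - 1. \<bar>h (s' (Suc i)) - h (s' i)\<bar>) = (\<Sum>i<Suc n - 1. \<bar>h (t (Suc i)) - h (t i)\<bar>)"
        using s1 sumn ms(4,5) by simp
    qed simp
  qed
qed

lemma tv_chain:
  assumes "\<forall>i<n. c \<le> t i \<and> t i \<le> d" "\<forall>i. Suc i < n \<longrightarrow> t i \<le> t (Suc i)"
  shows "ereal (\<Sum>i<n - 1. \<bar>h (t (Suc i)) - h (t i)\<bar>) \<le> total_variation h c d"
proof (cases "n = 0")
  case True thus ?thesis using tv_nonneg[of h c d] by (simp add: zero_ereal_def)
next
  case False
  then obtain m s where "1 \<le> m" "\<forall>i<m. c \<le> s i \<and> s i \<le> d" "\<forall>i. Suc i < m \<longrightarrow> s i < s (Suc i)"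
     "(\<Sum>i<m - 1. \<bar>h (s (Suc i)) - h (s i)\<bar>) = (\<Sum>i<n - 1. \<bar>h (t (Suc i)) - h (t i)\<bar>)"
    using strictify[of n c t d h] assms by auto
  thus ?thesis using tv_upper[of m c s d h] by metis
qed


lemma tv_le_tv:
  assumes "\<And>s t. c \<le> s \<Longrightarrow> s \<le> d \<Longrightarrow> c \<le> t \<Longrightarrow> t \<le> d \<Longrightarrow> \<bar>h' s - h' t\<bar> \<le> \<bar>h s - h t\<bar>"
  shows "total_variation h' c d \<le> total_variation h c d"
proof (rule tv_least)
  fix n t assume t: "\<forall>i<n. c \<le> t i \<and> t i \<le> d" "\<forall>i. Suc i < n \<longrightarrow> t i < t (Suc i)"
  have "(\<Sum>i<n - 1. \<bar>h' (t (Suc i)) - h' (t i)\<bar>) \<le> (\<Sum>i<n - 1. \<bar>h (t (Suc i)) - h (t i)\<bar>)"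
    by (rule sum_mono, rule assms) (use t in auto)
  hence "ereal (\<Sum>i<n - 1. \<bar>h' (t (Suc i)) - h' (t i)\<bar>) \<le> ereal (\<Sum>i<n - 1. \<bar>h (t (Suc i)) - h (t i)\<bar>)"
    by simp
  also have "\<dots> \<le> total_variation h c d" by (rule tv_upper) (use t in auto)
  finally show "ereal (\<Sum>i<n - 1. \<bar>h' (t (Suc i)) - h' (t i)\<bar>) \<le> total_variation h c d" .
qed

lemma tv_cong:
  assumes "\<And>t. c \<le> t \<Longrightarrow> t \<le> d \<Longrightarrow> h' t = h t"
  shows "total_variation h' c d = total_variation h c d"
  by (rule antisym; rule tv_le_tv) (auto simp: assms)

lemma tv_const: "total_variation (\<lambda>_. k) c d = 0"
proof (rule antisym)
  show "total_variation (\<lambda>_. k) c d \<le> 0" by (rule tv_least) (simp add: zero_ereal_def)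
qed (rule tv_nonneg)

lemma tv_sub:
  assumes "c \<le> c'" "d' \<le> d"
  shows "total_variation h c' d' \<le> total_variation h c d"
proof (rule tv_least)
  fix n t assume t: "\<forall>i<n. c' \<le> t i \<and> t i \<le> d'" "\<forall>i. Suc i < n \<longrightarrow> t i < t (Suc i)"
  have "\<forall>i<n. c \<le> t i \<and> t i \<le> d" using t(1) assms by (meson order_trans)
  thus "ereal (\<Sum>i<n - 1. \<bar>h (t (Suc i)) - h (t i)\<bar>) \<le> total_variation h c d"
    using tv_upper t(2) by blast
qed

lemma ereal_Sup_add_le:
  fixes A B :: "ereal set"
  assumes "A \<noteq> {}" "B \<noteq> {}" "\<forall>a\<in>A. 0 \<le> a" "\<forall>b\<in>B. 0 \<le> b" "\<And>a b. a \<in> A \<Longrightarrow> b \<in> B \<Longrightarrow> a + b \<le> X"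
  shows "Sup A + Sup B \<le> X"
proof -
  obtain b0 where b0: "b0 \<in> B" using assms(2) by blast
  have "0 \<le> Sup B" using b0 assms(4) Sup_upper[OF b0] by (meson order_trans)
  hence sB: "Sup B \<noteq> - \<infinity>" by auto
  have "Sup A + Sup B = (SUP a\<in>A. a + Sup B)"
    using SUP_ereal_add_left[OF assms(1) sB, of id] by simp
  also have "\<dots> \<le> X"
  proof (rule SUP_least)
    fix a assume a: "a \<in> A"
    have an: "a \<noteq> - \<infinity>" using a assms(3) by auto
    have "a + Sup B = (SUP b\<in>B. a + b)"
      using SUP_ereal_add_right[OF assms(2) an, of id] by simp
    also have "\<dots> \<le> X" by (rule SUP_least) (use a assms(5) in auto)
    finally show "a + Sup B \<le> X" .
  qed
  finally show ?thesis .
qed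

lemma sum_split_add: "(\<Sum>i<n+m. f i) = (\<Sum>i<n. f i) + (\<Sum>i<m. f (n+i::nat)::real)"
  by (induction m) auto

lemma tv_2piece:
  assumes cd: "c \<le> d" and de: "d \<le> e"
  shows "total_variation h c d + total_variation h d e \<le> total_variation h c e"
  unfolding total_variation_def[of h c d] total_variation_def[of h d e]
proof (rule ereal_Sup_add_le)
  let ?P = "\<lambda>c d n t. (\<forall>i<n. c \<le> t i \<and> t i \<le> d) \<and> (\<forall>i. Suc i < (n::nat) \<longrightarrow> t i < t (Suc i))"
  show "{ereal (\<Sum>i<n - 1. \<bar>h (t (Suc i)) - h (t i)\<bar>) |n t. ?P c d n t} \<noteq> {}" by blast
  show "{ereal (\<Sum>i<n - 1. \<bar>h (t (Suc i)) - h (t i)\<bar>) |n t. ?P d e n t} \<noteq> {}" by blast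
  show "\<forall>a\<in>{ereal (\<Sum>i<n - 1. \<bar>h (t (Suc i)) - h (t i)\<bar>) |n t. ?P c d n t}. 0 \<le> a"
    by (auto simp: zero_ereal_def intro!: sum_nonneg)
  show "\<forall>a\<in>{ereal (\<Sum>i<n - 1. \<bar>h (t (Suc i)) - h (t i)\<bar>) |n t. ?P d e n t}. 0 \<le> a"
    by (auto simp: zero_ereal_def intro!: sum_nonneg)
  fix a b
  assume "a \<in> {ereal (\<Sum>i<n - 1. \<bar>h (t (Suc i)) - h (t i)\<bar>) |n t. ?P c d n t}"
  then obtain n t where a: "a = ereal (\<Sum>i<n - 1. \<bar>h (t (Suc i)) - h (t i)\<bar>)" and t: "?P c d n t" by blast
  assume "b \<in> {ereal (\<Sum>i<n - 1. \<bar>h (t (Suc i)) - h (t i)\<bar>) |n t. ?P d e n t}"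
  then obtain m t' where b: "b = ereal (\<Sum>i<m - 1. \<bar>h (t' (Suc i)) - h (t' i)\<bar>)" and t': "?P d e m t'" by blast
  show "a + b \<le> total_variation h c e"
  proof (cases "n = 0 \<or> m = 0")
    case True
    then show ?thesis
    proof
      assume "n = 0"
      hence "a = 0" using a by (simp add: zero_ereal_def)
      moreover have "b \<le> total_variation h c e"
      proof -
        have "\<forall>i<m. c \<le> t' i \<and> t' i \<le> e" using t' cd by (meson order_trans)
        thus ?thesis unfolding b using tv_upper t' by blast
      qed
      ultimately show ?thesis by simp
    next
      assume "m = 0"
      hence "b = 0" using b by (simp add: zero_ereal_def)
      moreover have "a \<le> total_variation h c e"
      proof -
        have "\<forall>i<n. c \<le> t i \<and> t i \<le> e" using t de by (meson order_trans)
        thus ?thesis unfolding a using tv_upper t by blast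
      qed
      ultimately show ?thesis by simp
    qed
  next
    case False
    then obtain n' m' where nm: "n = Suc n'" "m = Suc m'" by (cases n; cases m) auto
    define w where "w i = (if i < n then t i else t' (i - n))" for i
    let ?g = "\<lambda>i. \<bar>h (w (Suc i)) - h (w i)\<bar>"
    have f1: "ereal (\<Sum>i<(n + m) - 1. ?g i) \<le> total_variation h c e"
    proof (rule tv_chain)
      show "\<forall>i<n + m. c \<le> w i \<and> w i \<le> e"
      proof (intro allI impI)
        fix i assume i: "i < n + m"
        show "c \<le> w i \<and> w i \<le> e"
        proof (cases "i < n")
          case True thus ?thesis using t de by (auto simp: w_def)
        next
          case False
          hence "i - n < m" using i by linarith
          thus ?thesis using t' cd False by (auto simp: w_def)
        qed
      qed
      show "\<forall>i. Suc i < n + m \<longrightarrow> w i \<le> w (Suc i)"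
      proof (intro allI impI)
        fix i assume i: "Suc i < n + m"
        consider "Suc i < n" | "Suc i = n" | "n \<le> i" by linarith
        then show "w i \<le> w (Suc i)"
        proof cases
          case 1 thus ?thesis using t by (auto simp: w_def less_imp_le)
        next
          case 2
          have "t i \<le> d" using t 2 by auto
          moreover have "d \<le> t' 0" using t' nm by auto
          ultimately show ?thesis using 2 by (auto simp: w_def)
        next
          case 3
          hence "Suc (i - n) < m" using i by linarith
          hence "t' (i - n) < t' (Suc (i - n))" using t' by blast
          moreover have "Suc i - n = Suc (i - n)" using 3 by linarith
          ultimately show ?thesis using 3 by (auto simp: w_def)
        qed
      qed
    qed
    have f2: "(\<Sum>i<(n + m) - 1. ?g i) = (\<Sum>i<n'. ?g i) + (\<Sum>i<Suc m'. ?g (n' + i))"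
      using nm sum_split_add[of ?g n' "Suc m'"] by simp
    have f3: "(\<Sum>i<n'. ?g i) = (\<Sum>i<n - 1. \<bar>h (t (Suc i)) - h (t i)\<bar>)"
      using nm by (intro sum.cong) (auto simp: w_def)
    have f4: "(\<Sum>i<Suc m'. ?g (n' + i)) = ?g n' + (\<Sum>i<m'. ?g (n' + Suc i))"
      by (subst sum.lessThan_Suc_shift) simp
    have f5: "(\<Sum>i<m'. ?g (n' + Suc i)) = (\<Sum>i<m - 1. \<bar>h (t' (Suc i)) - h (t' i)\<bar>)"
      using nm by (intro sum.cong) (auto simp: w_def)
    have "(\<Sum>i<n - 1. \<bar>h (t (Suc i)) - h (t i)\<bar>) + (\<Sum>i<m - 1. \<bar>h (t' (Suc i)) - h (t' i)\<bar>)
          \<le> (\<Sum>i<n + m - 1. ?g i)" using f2 f3 f4 f5 by simp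
    hence "ereal ((\<Sum>i<n - 1. \<bar>h (t (Suc i)) - h (t i)\<bar>) + (\<Sum>i<m - 1. \<bar>h (t' (Suc i)) - h (t' i)\<bar>))
        \<le> total_variation h c e" using f1 by (meson ereal_less_eq(3) order_trans)
    thus ?thesis using a b by simp
  qed
qed

lemma tv_partition:
  assumes "\<forall>i<l. x i \<le> x (Suc i)"
  shows "(\<Sum>i<l. total_variation h (x i) (x (Suc i))) \<le> total_variation h (x 0) (x l)"
  using assms
proof (induction l)
  case 0 thus ?case using tv_nonneg by simp
next
  case (Suc l)
  have mono: "x 0 \<le> x l" using Suc.prems
  proof (induction l)
    case (Suc l)
    have "x 0 \<le> x l" using Suc.IH Suc.prems by simp
    moreover have "x l \<le> x (Suc l)" using Suc.prems by simp
    ultimately show ?case by linarith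
  qed simp
  have "(\<Sum>i<Suc l. total_variation h (x i) (x (Suc i))) =
      (\<Sum>i<l. total_variation h (x i) (x (Suc i))) + total_variation h (x l) (x (Suc l))" by simp
  also have "\<dots> \<le> total_variation h (x 0) (x l) + total_variation h (x l) (x (Suc l))"
    using Suc by (intro add_right_mono) auto
  also have "\<dots> \<le> total_variation h (x 0) (x (Suc l))"
    by (rule tv_2piece) (use mono Suc.prems in auto)
  finally show ?case .
qed

lemma chain_mono:
  fixes x :: "nat \<Rightarrow> real"
  assumes "\<forall>i<l. x i \<le> x (Suc i)" "i \<le> j" "j \<le> l"
  shows "x i \<le> x j"
  using assms(2,3)
proof (induction j)
  case 0 thus ?case by simp
next
  case (Suc j)
  show ?case
  proof (cases "i = Suc j")
    case True thus ?thesis by simp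
  next
    case False
    hence "x i \<le> x j" using Suc by simp
    moreover have "x j \<le> x (Suc j)" using assms(1) Suc.prems by simp
    ultimately show ?thesis by linarith
  qed
qed

lemma trunc_le_tv:
  assumes "\<forall>t\<in>{c..d}. \<bar>h t - u t\<bar> \<le> \<delta> / 2"
  shows "truncated_variation h c d \<delta> \<le> total_variation u c d"
  unfolding truncated_variation_def by (rule INF_lower) (use assms in simp)

lemma trunc_nonneg: "0 \<le> truncated_variation h c d \<delta>"
  unfolding truncated_variation_def by (rule INF_greatest) (rule tv_nonneg)

lemma trunc_approx:
  assumes "0 \<le> \<delta>" "0 < e"
  shows "\<exists>v. (\<forall>t\<in>{c..d}. \<bar>h t - v t\<bar> \<le> \<delta> / 2) \<and>
     (truncated_variation h c d \<delta> \<noteq> \<infinity> \<longrightarrow>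
        total_variation v c d \<le> ereal (real_of_ereal (truncated_variation h c d \<delta>) + e))"
proof (cases "truncated_variation h c d \<delta> = \<infinity>")
  case True
  show ?thesis by (rule exI[of _ h]) (use True assms in simp)
next
  case False
  define T where "T = truncated_variation h c d \<delta>"
  have T0: "0 \<le> T" unfolding T_def by (rule trunc_nonneg)
  define r where "r = real_of_ereal T"
  have Tr: "T = ereal r" using T0 False unfolding T_def r_def
    by (metis abs_ereal_ge0 ereal_real')
  have "T < ereal (real_of_ereal T + e)" using assms(2) unfolding Tr by simp
  hence "(INF u \<in> {u. \<forall>t\<in>{c..d}. \<bar>h t - u t\<bar> \<le> \<delta> / 2}. total_variation u c d) < ereal (real_of_ereal T + e)"
    unfolding T_def truncated_variation_def .
  then obtain v where v: "\<forall>t\<in>{c..d}. \<bar>h t - v t\<bar> \<le> \<delta> / 2" "total_variation v c d < ereal (real_of_ereal T + e)"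
    unfolding INF_less_iff by blast
  show ?thesis by (rule exI[of _ v]) (use v in \<open>auto simp: T_def\<close>)
qed

lemma trunc_zero: "truncated_variation h c d 0 = total_variation h c d"
proof (rule antisym)
  show "truncated_variation h c d 0 \<le> total_variation h c d" by (rule trunc_le_tv) simp
  show "total_variation h c d \<le> truncated_variation h c d 0"
    unfolding truncated_variation_def
  proof (rule INF_greatest)
    fix u assume "u \<in> {u. \<forall>t\<in>{c..d}. \<bar>h t - u t\<bar> \<le> 0 / 2}"
    hence "\<And>t. c \<le> t \<Longrightarrow> t \<le> d \<Longrightarrow> u t = h t" by auto
    thus "total_variation h c d \<le> total_variation u c d" using tv_cong by (metis order_refl)
  qed
qed

lemma trunc_mono:
  assumes "\<delta> \<le> \<delta>'"
  shows "truncated_variation h c d \<delta>' \<le> truncated_variation h c d \<delta>"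
  unfolding truncated_variation_def
  by (rule INF_superset_mono) (use assms in \<open>auto intro: order_trans\<close>)

lemma trunc_sub:
  assumes "c \<le> c'" "d' \<le> d"
  shows "truncated_variation h c' d' \<delta> \<le> truncated_variation h c d \<delta>"
  unfolding truncated_variation_def[of h c d]
proof (rule INF_greatest)
  fix u assume u: "u \<in> {u. \<forall>t\<in>{c..d}. \<bar>h t - u t\<bar> \<le> \<delta> / 2}"
  have "truncated_variation h c' d' \<delta> \<le> total_variation u c' d'"
    by (rule trunc_le_tv) (use u assms in auto)
  also have "\<dots> \<le> total_variation u c d" by (rule tv_sub) (use assms in auto)
  finally show "truncated_variation h c' d' \<delta> \<le> total_variation u c d" .
qed

lemma trunc_partition:
  assumes "\<forall>i<l. x i \<le> x (Suc i)"
  shows "(\<Sum>i<l. truncated_variation h (x i) (x (Suc i)) \<delta>) \<le> truncated_variation h (x 0) (x l) \<delta>"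
  unfolding truncated_variation_def[of h "x 0" "x l"]
proof (rule INF_greatest)
  fix u assume u: "u \<in> {u. \<forall>t\<in>{x 0..x l}. \<bar>h t - u t\<bar> \<le> \<delta> / 2}"
  have "(\<Sum>i<l. truncated_variation h (x i) (x (Suc i)) \<delta>) \<le> (\<Sum>i<l. total_variation u (x i) (x (Suc i)))"
  proof (rule sum_mono)
    fix i assume i: "i \<in> {..<l}"
    have a: "x 0 \<le> x i" by (rule chain_mono[OF assms]) (use i in auto)
    have b: "x (Suc i) \<le> x l" by (rule chain_mono[OF assms]) (use i in auto)
    show "truncated_variation h (x i) (x (Suc i)) \<delta> \<le> total_variation u (x i) (x (Suc i))"
      by (rule trunc_le_tv) (use u a b in auto)
  qed
  also have "\<dots> \<le> total_variation u (x 0) (x l)" by (rule tv_partition) (use assms in auto)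
  finally show "(\<Sum>i<l. truncated_variation h (x i) (x (Suc i)) \<delta>) \<le> total_variation u (x 0) (x l)" .
qed

lemma trunc_const_zero:
  assumes "\<forall>t\<in>{c..d}. \<bar>h t - k\<bar> \<le> \<delta> / 2"
  shows "truncated_variation h c d \<delta> = 0"
proof (rule antisym)
  have "truncated_variation h c d \<delta> \<le> total_variation (\<lambda>_. k) c d" by (rule trunc_le_tv) (use assms in simp)
  thus "truncated_variation h c d \<delta> \<le> 0" by (simp add: tv_const)
qed (rule trunc_nonneg)

definition RS :: "(real \<Rightarrow> real) \<Rightarrow> (real \<Rightarrow> real) \<Rightarrow> nat \<Rightarrow> (nat \<Rightarrow> real) \<Rightarrow> (nat \<Rightarrow> real) \<Rightarrow> real" where
  "RS f g l x \<nu> = (\<Sum>i<l. f (\<nu> i) * (g (x (Suc i)) - g (x i)))"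

definition ispart :: "real \<Rightarrow> real \<Rightarrow> nat \<Rightarrow> (nat \<Rightarrow> real) \<Rightarrow> (nat \<Rightarrow> real) \<Rightarrow> bool" where
  "ispart c d l x \<nu> \<longleftrightarrow> x 0 = c \<and> x l = d \<and> (\<forall>i<l. x i < x (Suc i)) \<and> (\<forall>i<l. x i \<le> \<nu> i \<and> \<nu> i \<le> x (Suc i))"

lemma ispart_range:
  assumes "ispart c d l x \<nu>" "i \<le> l"
  shows "c \<le> x i" "x i \<le> d"
proof -
  have m: "\<forall>i<l. x i \<le> x (Suc i)" using assms(1) unfolding ispart_def by (simp add: less_imp_le)
  show "c \<le> x i" using chain_mono[OF m, of 0 i] assms unfolding ispart_def by auto
  show "x i \<le> d" using chain_mono[OF m, of i l] assms unfolding ispart_def by auto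
qed

lemma ispart_le: "ispart c d l x \<nu> \<Longrightarrow> c \<le> d"
  using ispart_range[of c d l x \<nu> 0] by simp

lemma ispart_tag:
  assumes "ispart c d l x \<nu>" "i < l"
  shows "c \<le> \<nu> i" "\<nu> i \<le> d"
  using ispart_range[OF assms(1), of i] ispart_range[OF assms(1), of "Suc i"] assms unfolding ispart_def
  by force+

lemma RS_telescope:
  fixes g :: "real \<Rightarrow> real" and k :: real
  shows "(\<Sum>i<l. k * (g (x (Suc i)) - g (x i))) = k * (g (x l) - g (x 0))"
  unfolding sum_distrib_left[symmetric] using sum_lessThan_telescope[of "\<lambda>i. g (x i)" l] by simp

lemma sumvar_le_tv:
  assumes "ispart c d l x \<nu>"
  shows "ereal (\<Sum>i<l. \<bar>w (x (Suc i)) - w (x i)\<bar>) \<le> total_variation w c d"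
proof -
  have "ereal (\<Sum>i<Suc l - 1. \<bar>w (x (Suc i)) - w (x i)\<bar>) \<le> total_variation w c d"
    by (rule tv_upper) (use assms ispart_range[OF assms] in \<open>auto simp: ispart_def\<close>)
  thus ?thesis by simp
qed

lemma RS_bound_sup:
  assumes "\<forall>i<l. \<bar>h (\<nu> i)\<bar> \<le> M"
  shows "\<bar>RS h w l x \<nu>\<bar> \<le> M * (\<Sum>i<l. \<bar>w (x (Suc i)) - w (x i)\<bar>)"
proof -
  have "\<bar>RS h w l x \<nu>\<bar> \<le> (\<Sum>i<l. \<bar>h (\<nu> i) * (w (x (Suc i)) - w (x i))\<bar>)"
    unfolding RS_def by (rule sum_abs)
  also have "\<dots> \<le> (\<Sum>i<l. M * \<bar>w (x (Suc i)) - w (x i)\<bar>)"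
    by (rule sum_mono) (use assms in \<open>auto simp: abs_mult intro: mult_right_mono\<close>)
  finally show ?thesis by (simp add: sum_distrib_left)
qed

lemma RS_bound_tv:
  assumes "ispart c d l x \<nu>" "\<forall>t\<in>{c..d}. \<bar>h t\<bar> \<le> M" "total_variation w c d \<le> ereal V" "0 \<le> M"
  shows "\<bar>RS h w l x \<nu>\<bar> \<le> M * V"
proof -
  have "\<bar>RS h w l x \<nu>\<bar> \<le> M * (\<Sum>i<l. \<bar>w (x (Suc i)) - w (x i)\<bar>)"
    by (rule RS_bound_sup) (use assms(2) ispart_tag[OF assms(1)] in auto)
  also have "(\<Sum>i<l. \<bar>w (x (Suc i)) - w (x i)\<bar>) \<le> V"
    using sumvar_le_tv[OF assms(1), of w] assms(3) by (metis ereal_less_eq(3) order_trans)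
  hence "M * (\<Sum>i<l. \<bar>w (x (Suc i)) - w (x i)\<bar>) \<le> M * V" using assms(4) by (simp add: mult_left_mono)
  finally show ?thesis .
qed

definition chainpt :: "(nat \<Rightarrow> real) \<Rightarrow> (nat \<Rightarrow> real) \<Rightarrow> nat \<Rightarrow> real" where
  "chainpt x \<nu> j = (if j = 0 then x 0 else \<nu> (j - 1))"

lemma abel_identity:
  fixes h w :: "real \<Rightarrow> real"
  shows "RS h w l x \<nu> = h (x 0) * (w (x l) - w (x 0)) +
    (\<Sum>i<l. (w (x l) - w (x i)) * (h (chainpt x \<nu> (Suc i)) - h (chainpt x \<nu> i)))"
proof (induction l)
  case 0 thus ?case by (simp add: RS_def)
next
  case (Suc l)
  let ?tt = "chainpt x \<nu>"
  have tel: "(\<Sum>i<Suc l. h (?tt (Suc i)) - h (?tt i)) = h (\<nu> l) - h (x 0)"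
    using sum_lessThan_telescope[of "\<lambda>j. h (?tt j)" "Suc l"] by (simp add: chainpt_def)
  have "(\<Sum>i<Suc l. (w (x (Suc l)) - w (x i)) * (h (?tt (Suc i)) - h (?tt i))) =
      (\<Sum>i<Suc l. (w (x (Suc l)) - w (x l)) * (h (?tt (Suc i)) - h (?tt i)) + (w (x l) - w (x i)) * (h (?tt (Suc i)) - h (?tt i)))"
    by (rule sum.cong) (auto simp: algebra_simps)
  also have "\<dots> = (w (x (Suc l)) - w (x l)) * (\<Sum>i<Suc l. h (?tt (Suc i)) - h (?tt i)) +
      (\<Sum>i<Suc l. (w (x l) - w (x i)) * (h (?tt (Suc i)) - h (?tt i)))"
    by (simp only: sum.distrib sum_distrib_left)
  also have "(\<Sum>i<Suc l. (w (x l) - w (x i)) * (h (?tt (Suc i)) - h (?tt i))) =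
      (\<Sum>i<l. (w (x l) - w (x i)) * (h (?tt (Suc i)) - h (?tt i)))" by simp
  finally have eq1: "(\<Sum>i<Suc l. (w (x (Suc l)) - w (x i)) * (h (?tt (Suc i)) - h (?tt i))) =
      (w (x (Suc l)) - w (x l)) * (h (\<nu> l) - h (x 0)) +
      (\<Sum>i<l. (w (x l) - w (x i)) * (h (?tt (Suc i)) - h (?tt i)))" unfolding tel .
  have eq2: "RS h w (Suc l) x \<nu> = RS h w l x \<nu> + h (\<nu> l) * (w (x (Suc l)) - w (x l))"
    by (simp add: RS_def)
  show ?case unfolding eq2 Suc.IH eq1 by (simp add: algebra_simps)
qed

lemma RS_abel_bound:
  assumes P: "ispart c d l x \<nu>" and h0: "h c = 0"
    and B: "\<forall>s\<in>{c..d}. \<forall>t\<in>{c..d}. \<bar>w s - w t\<bar> \<le> B" and V: "total_variation h c d \<le> ereal V"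
  shows "\<bar>RS h w l x \<nu>\<bar> \<le> B * V"
proof -
  let ?tt = "chainpt x \<nu>"
  have cd: "c \<le> d" using ispart_le[OF P] .
  have B0: "0 \<le> B" using B cd by force
  have x0: "x 0 = c" "x l = d" using P by (auto simp: ispart_def)
  have "RS h w l x \<nu> = (\<Sum>i<l. (w (x l) - w (x i)) * (h (?tt (Suc i)) - h (?tt i)))"
    using abel_identity[of h w l x \<nu>] x0 h0 by simp
  hence "\<bar>RS h w l x \<nu>\<bar> \<le> (\<Sum>i<l. \<bar>(w (x l) - w (x i)) * (h (?tt (Suc i)) - h (?tt i))\<bar>)"
    by (simp add: sum_abs)
  also have "\<dots> \<le> (\<Sum>i<l. B * \<bar>h (?tt (Suc i)) - h (?tt i)\<bar>)"
  proof (rule sum_mono)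
    fix i assume i: "i \<in> {..<l}"
    have "\<bar>w (x l) - w (x i)\<bar> \<le> B" using B ispart_range[OF P, of i] ispart_range[OF P, of l] i by auto
    thus "\<bar>(w (x l) - w (x i)) * (h (?tt (Suc i)) - h (?tt i))\<bar> \<le> B * \<bar>h (?tt (Suc i)) - h (?tt i)\<bar>"
      by (simp add: abs_mult mult_right_mono)
  qed
  also have "\<dots> = B * (\<Sum>i<Suc l - 1. \<bar>h (?tt (Suc i)) - h (?tt i)\<bar>)" by (simp add: sum_distrib_left)
  also have "\<dots> \<le> B * V"
  proof (rule mult_left_mono[OF _ B0])
    have "ereal (\<Sum>i<Suc l - 1. \<bar>h (?tt (Suc i)) - h (?tt i)\<bar>) \<le> total_variation h c d"
    proof (rule tv_chain)
      show "\<forall>i<Suc l. c \<le> ?tt i \<and> ?tt i \<le> d"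
        using ispart_tag[OF P] x0 cd by (auto simp: chainpt_def)
      show "\<forall>i. Suc i < Suc l \<longrightarrow> ?tt i \<le> ?tt (Suc i)"
      proof (intro allI impI)
        fix i assume i: "Suc i < Suc l"
        show "?tt i \<le> ?tt (Suc i)"
        proof (cases i)
          case 0 thus ?thesis using P i by (auto simp: ispart_def chainpt_def)
        next
          case (Suc j)
          have "\<nu> j \<le> x (Suc j)" "x (Suc j) \<le> \<nu> (Suc j)" using P i Suc by (auto simp: ispart_def)
          thus ?thesis using Suc by (simp add: chainpt_def)
        qed
      qed
    qed
    thus "(\<Sum>i<Suc l - 1. \<bar>h (?tt (Suc i)) - h (?tt i)\<bar>) \<le> V" using V by (metis ereal_less_eq(3) order_trans)
  qed
  finally show ?thesis .
qed

lemma ereal_prod_bound: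
  assumes "0 \<le> a" "0 \<le> T" "ereal a * T \<le> ereal b"
  shows "a * real_of_ereal T \<le> b" "0 < a \<Longrightarrow> T \<noteq> \<infinity>" "0 \<le> b"
proof -
  have b0: "0 \<le> ereal b" using assms ereal_0_le_mult[of "ereal a" T] by (metis ereal_less_eq(5) order_trans)
  thus "0 \<le> b" by simp
  show "a * real_of_ereal T \<le> b"
  proof (cases T)
    case (real r) thus ?thesis using assms(3) by simp
  next
    case PInf thus ?thesis using \<open>0 \<le> b\<close> by simp
  next
    case MInf thus ?thesis using assms(2) by simp
  qed
  show "0 < a \<Longrightarrow> T \<noteq> \<infinity>" using assms(3) by auto
qed

lemma clip_lip:
  fixes M a b :: real
  shows "\<bar>max (- M) (min M a) - max (- M) (min M b)\<bar> \<le> \<bar>a - b\<bar>"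
  by (auto simp: max_def min_def abs_if)

lemma approxF:
  fixes f :: "real \<Rightarrow> real"
  assumes "c \<le> d" "\<forall>t\<in>{c..d}. \<bar>f t - f c\<bar> \<le> M" "0 \<le> M" "0 \<le> \<delta>" "0 < e"
  shows "\<exists>u. (\<forall>t\<in>{c..d}. \<bar>(f t - f c) - u t\<bar> \<le> \<delta>) \<and> u c = 0 \<and> (\<forall>t\<in>{c..d}. \<bar>u t\<bar> \<le> M) \<and>
     (truncated_variation f c d \<delta> \<noteq> \<infinity> \<longrightarrow>
        total_variation u c d \<le> ereal (real_of_ereal (truncated_variation f c d \<delta>) + e))"
proof -
  obtain v where v: "\<forall>t\<in>{c..d}. \<bar>f t - v t\<bar> \<le> \<delta> / 2"
    "truncated_variation f c d \<delta> \<noteq> \<infinity> \<longrightarrow>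
        total_variation v c d \<le> ereal (real_of_ereal (truncated_variation f c d \<delta>) + e)"
    using trunc_approx[OF assms(4,5), where h=f and c=c and d=d] by blast
  define u where "u t = max (- M) (min M (v t - v c))" for t
  have c: "c \<in> {c..d}" using assms(1) by simp
  show ?thesis
  proof (rule exI[of _ u], intro conjI ballI impI)
    fix t assume t: "t \<in> {c..d}"
    have "\<bar>f t - f c\<bar> \<le> M" using assms(2) t by blast
    hence "f t - f c = max (- M) (min M (f t - f c))" by (simp add: abs_le_iff max_def min_def)
    hence "\<bar>(f t - f c) - u t\<bar> \<le> \<bar>(f t - f c) - (v t - v c)\<bar>"
      unfolding u_def by (metis clip_lip)
    also have "\<dots> \<le> \<bar>f t - v t\<bar> + \<bar>f c - v c\<bar>" by simp
    also have "\<dots> \<le> \<delta>"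
    proof -
      have "\<bar>f t - v t\<bar> \<le> \<delta> / 2" using v(1) t by blast
      moreover have "\<bar>f c - v c\<bar> \<le> \<delta> / 2" using v(1) c by blast
      ultimately show ?thesis by linarith
    qed
    finally show "\<bar>(f t - f c) - u t\<bar> \<le> \<delta>" .
  next
    show "u c = 0" using assms(3) by (simp add: u_def)
  next
    fix t show "\<bar>u t\<bar> \<le> M" using assms(3) by (simp add: u_def abs_le_iff)
  next
    assume fin: "truncated_variation f c d \<delta> \<noteq> \<infinity>"
    have "total_variation u c d \<le> total_variation v c d"
      by (rule tv_le_tv) (use clip_lip in \<open>simp add: u_def\<close>)
    also have "\<dots> \<le> ereal (real_of_ereal (truncated_variation f c d \<delta>) + e)" using v(2) fin by simp
    finally show "total_variation u c d \<le> ereal (real_of_ereal (truncated_variation f c d \<delta>) + e)" .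
  qed
qed

lemma RS_expand:
  fixes Fs Gs :: "nat \<Rightarrow> real \<Rightarrow> real"
  shows "RS (Fs n) (Gs n) l x \<nu> = RS (Fs 0) (Gs 0) l x \<nu> +
     (\<Sum>k<n. RS (\<lambda>t. Fs (Suc k) t - Fs k t) (Gs (Suc k)) l x \<nu> + RS (Fs k) (\<lambda>t. Gs (Suc k) t - Gs k t) l x \<nu>)"
proof (induction n)
  case 0 thus ?case by simp
next
  case (Suc n)
  have "RS (Fs (Suc n)) (Gs (Suc n)) l x \<nu> = RS (Fs n) (Gs n) l x \<nu> +
     (RS (\<lambda>t. Fs (Suc n) t - Fs n t) (Gs (Suc n)) l x \<nu> + RS (Fs n) (\<lambda>t. Gs (Suc n) t - Gs n t) l x \<nu>)"
    unfolding RS_def by (simp add: sum.distrib[symmetric] algebra_simps)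
  thus ?case using Suc.IH by simp
qed

lemma geom_half: "(\<Sum>k<n. (1/2::real) ^ Suc k) \<le> 1"
proof -
  have "(\<Sum>k<n. (1/2::real) ^ Suc k) = 1 - (1/2) ^ n" by (induction n) auto
  thus ?thesis by simp
qed

lemma sum_double_le:
  fixes X :: "nat \<Rightarrow> real"
  assumes "\<forall>k. 0 \<le> X k"
  shows "(\<Sum>k<n. X k + X (Suc k)) \<le> (\<Sum>k<Suc n. 2 ^ k * X k)"
proof -
  have "(\<Sum>k<n. X k + X (Suc k)) + X n \<le> (\<Sum>k<Suc n. 2 ^ k * X k)"
  proof (induction n)
    case 0 thus ?case by simp
  next
    case (Suc n)
    have "(2::real) \<le> 2 ^ Suc n" by simp
    hence "2 * X (Suc n) \<le> 2 ^ Suc n * X (Suc n)" using assms by (intro mult_right_mono) auto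
    thus ?case using Suc.IH by simp
  qed
  thus ?thesis using assms by (smt (verit))
qed


lemma core:
  fixes f g :: "real \<Rightarrow> real" and \<eta> \<theta> A B :: "nat \<Rightarrow> real"
  assumes P: "ispart c d l x \<nu>"
    and M: "\<forall>t\<in>{c..d}. \<bar>f t - f c\<bar> \<le> M" "0 \<le> M"
    and eta: "\<forall>k. 0 \<le> \<eta> k" "antimono \<eta>" "\<eta> \<longlonglongrightarrow> 0"
    and theta: "\<forall>k. 0 \<le> \<theta> k" "antimono \<theta>" "\<theta> \<longlonglongrightarrow> 0"
    and A: "summable A" "\<forall>k. ereal (2 ^ k * (if k = 0 then M else \<eta> (k - 1))) * truncated_variation g c d (\<theta> k) \<le> ereal (A k)"
    and B: "summable B" "\<forall>k. ereal (2 ^ k * \<theta> k) * truncated_variation f c d (\<eta> k) \<le> ereal (B k)"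
  shows "\<bar>RS f g l x \<nu> - f c * (g d - g c)\<bar> \<le> suminf A + suminf B"
proof -
  have cd: "c \<le> d" using ispart_le[OF P] .
  define Fo where "Fo t = f t - f c" for t
  define tg where "tg k = real_of_ereal (truncated_variation g c d (\<theta> k))" for k
  define tf where "tf k = real_of_ereal (truncated_variation f c d (\<eta> k))" for k
  define cf where "cf k = (if k = 0 then M else \<eta> (k - 1))" for k
  have cf0: "0 \<le> cf k" for k using M eta by (simp add: cf_def)
  have Aall: "0 \<le> A k \<and> 2 ^ k * cf k * tg k \<le> A k \<and> (0 < cf k \<longrightarrow> truncated_variation g c d (\<theta> k) \<noteq> \<infinity>)" for k
  proof -
    have a0: "0 \<le> 2 ^ k * cf k" using cf0[of k] by simp
    have h: "ereal (2 ^ k * cf k) * truncated_variation g c d (\<theta> k) \<le> ereal (A k)"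
      using A(2) by (simp add: cf_def)
    note e = ereal_prod_bound[OF a0 trunc_nonneg h]
    have "0 < cf k \<Longrightarrow> 0 < 2 ^ k * cf k" by simp
    thus ?thesis using e unfolding tg_def by auto
  qed
  have Ball: "0 \<le> B k \<and> 2 ^ k * \<theta> k * tf k \<le> B k \<and> (0 < \<theta> k \<longrightarrow> truncated_variation f c d (\<eta> k) \<noteq> \<infinity>)" for k
  proof -
    have a0: "0 \<le> 2 ^ k * \<theta> k" using theta(1) by simp
    note e = ereal_prod_bound[OF a0 trunc_nonneg B(2)[rule_format, of k]]
    have "0 < \<theta> k \<Longrightarrow> 0 < 2 ^ k * \<theta> k" by simp
    thus ?thesis using e unfolding tf_def by auto
  qed
  have tg0: "0 \<le> tg k" for k unfolding tg_def by (rule real_of_ereal_pos[OF trunc_nonneg])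
  have tf0: "0 \<le> tf k" for k unfolding tf_def by (rule real_of_ereal_pos[OF trunc_nonneg])
  have etaS: "\<eta> (Suc k) \<le> \<eta> k" for k using eta(2) by (simp add: antimonoD)
  have eta0: "\<eta> k \<le> \<eta> 0" for k using eta(2) by (simp add: antimonoD)
  have thetaS: "\<theta> (Suc k) \<le> \<theta> k" for k using theta(2) by (simp add: antimonoD)
  have theta0: "\<theta> k \<le> \<theta> 0" for k using theta(2) by (simp add: antimonoD)
  have xin: "c \<le> x i \<and> x i \<le> d" if "i \<le> l" for i using ispart_range[OF P that] by simp
  have nuin: "c \<le> \<nu> i \<and> \<nu> i \<le> d" if "i < l" for i using ispart_tag[OF P that] by simp
  define V0 where "V0 = (\<Sum>i<l. \<bar>g (x (Suc i)) - g (x i)\<bar>)"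
  have V00: "0 \<le> V0" unfolding V0_def by (simp add: sum_nonneg)
  have main: "\<bar>RS Fo g l x \<nu>\<bar> \<le> suminf A + suminf B + 2 * \<epsilon>" if \<epsilon>: "0 < \<epsilon>" for \<epsilon>
  proof -
    define K where "K = M + 2 * \<eta> 0 + 2 * \<theta> 0 + 1"
    have K0: "0 < K" using M eta theta unfolding K_def by (smt (verit))
    define e where "e k = \<epsilon> / K * (1/2) ^ Suc k" for k
    have e0: "0 < e k" for k using \<epsilon> K0 by (simp add: e_def)
    have "\<forall>k. \<exists>v. (\<forall>t\<in>{c..d}. \<bar>g t - v t\<bar> \<le> \<theta> k / 2) \<and>
       (truncated_variation g c d (\<theta> k) \<noteq> \<infinity> \<longrightarrow> total_variation v c d \<le> ereal (tg k + e k))"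
      unfolding tg_def using trunc_approx theta(1) e0 by blast
    then obtain G where G: "\<forall>k. (\<forall>t\<in>{c..d}. \<bar>g t - G k t\<bar> \<le> \<theta> k / 2) \<and>
       (truncated_variation g c d (\<theta> k) \<noteq> \<infinity> \<longrightarrow> total_variation (G k) c d \<le> ereal (tg k + e k))"
      using choice[of "\<lambda>k v. (\<forall>t\<in>{c..d}. \<bar>g t - v t\<bar> \<le> \<theta> k / 2) \<and>
       (truncated_variation g c d (\<theta> k) \<noteq> \<infinity> \<longrightarrow> total_variation v c d \<le> ereal (tg k + e k))"] by blast
    have "\<forall>k. \<exists>u. (\<forall>t\<in>{c..d}. \<bar>(f t - f c) - u t\<bar> \<le> \<eta> k) \<and> u c = 0 \<and> (\<forall>t\<in>{c..d}. \<bar>u t\<bar> \<le> M) \<and>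
       (truncated_variation f c d (\<eta> k) \<noteq> \<infinity> \<longrightarrow> total_variation u c d \<le> ereal (tf k + e k))"
      unfolding tf_def using approxF[OF cd M(1) M(2)] eta(1) e0 by blast
    then obtain F where F: "\<forall>k. (\<forall>t\<in>{c..d}. \<bar>(f t - f c) - F k t\<bar> \<le> \<eta> k) \<and> F k c = 0 \<and> (\<forall>t\<in>{c..d}. \<bar>F k t\<bar> \<le> M) \<and>
       (truncated_variation f c d (\<eta> k) \<noteq> \<infinity> \<longrightarrow> total_variation (F k) c d \<le> ereal (tf k + e k))"
      using choice[of "\<lambda>k u. (\<forall>t\<in>{c..d}. \<bar>(f t - f c) - u t\<bar> \<le> \<eta> k) \<and> u c = 0 \<and> (\<forall>t\<in>{c..d}. \<bar>u t\<bar> \<le> M) \<and>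
       (truncated_variation f c d (\<eta> k) \<noteq> \<infinity> \<longrightarrow> total_variation u c d \<le> ereal (tf k + e k))"] by blast
    define Vg where "Vg k = (\<Sum>i<l. \<bar>G k (x (Suc i)) - G k (x i)\<bar>)" for k
    have Vg: "Vg k \<le> tg k + e k" if "truncated_variation g c d (\<theta> k) \<noteq> \<infinity>" for k
    proof -
      have "ereal (Vg k) \<le> total_variation (G k) c d" unfolding Vg_def by (rule sumvar_le_tv[OF P])
      also have "\<dots> \<le> ereal (tg k + e k)" using G that by blast
      finally show ?thesis by simp
    qed
    have Vg0: "0 \<le> Vg k" for k unfolding Vg_def by (simp add: sum_nonneg)
    have b0: "\<bar>RS (F 0) (G 0) l x \<nu>\<bar> \<le> A 0 + M * e 0"
    proof -
      have "\<bar>RS (F 0) (G 0) l x \<nu>\<bar> \<le> M * Vg 0" unfolding Vg_def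
        by (rule RS_bound_sup) (use F nuin in auto)
      also have "\<dots> \<le> A 0 + M * e 0"
      proof (cases "M = 0")
        case True thus ?thesis using Aall[of 0] by simp
      next
        case False
        hence Mp: "0 < M" using M(2) by simp
        hence fin: "truncated_variation g c d (\<theta> 0) \<noteq> \<infinity>" using Aall[of 0] by (simp add: cf_def)
        have "M * Vg 0 \<le> M * (tg 0 + e 0)" using Vg[OF fin] M(2) by (simp add: mult_left_mono)
        also have "\<dots> = M * tg 0 + M * e 0" by (simp add: algebra_simps)
        also have "M * tg 0 \<le> A 0" using Aall[of 0] by (simp add: cf_def)
        finally show ?thesis by simp
      qed
      finally show ?thesis .
    qed
    have b1: "\<bar>RS (\<lambda>t. F (Suc k) t - F k t) (G (Suc k)) l x \<nu>\<bar> \<le> A (Suc k) + 2 * \<eta> 0 * e (Suc k)" for k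
    proof -
      have "\<bar>RS (\<lambda>t. F (Suc k) t - F k t) (G (Suc k)) l x \<nu>\<bar> \<le> (2 * \<eta> k) * Vg (Suc k)" unfolding Vg_def
      proof (rule RS_bound_sup, intro allI impI)
        fix i assume i: "i < l"
        have t: "\<nu> i \<in> {c..d}" using nuin[OF i] by simp
        have "\<bar>(f (\<nu> i) - f c) - F (Suc k) (\<nu> i)\<bar> \<le> \<eta> (Suc k)" using F t by blast
        moreover have "\<bar>(f (\<nu> i) - f c) - F k (\<nu> i)\<bar> \<le> \<eta> k" using F t by blast
        ultimately show "\<bar>F (Suc k) (\<nu> i) - F k (\<nu> i)\<bar> \<le> 2 * \<eta> k" using etaS[of k] by linarith
      qed
      also have "\<dots> \<le> A (Suc k) + 2 * \<eta> 0 * e (Suc k)"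
      proof (cases "\<eta> k = 0")
        case True
        thus ?thesis using Aall[of "Suc k"] e0[of "Suc k"] eta(1) by simp
      next
        case False
        hence ep: "0 < \<eta> k" using eta(1) by (metis less_eq_real_def)
        hence fin: "truncated_variation g c d (\<theta> (Suc k)) \<noteq> \<infinity>" using Aall[of "Suc k"] by (simp add: cf_def)
        have "2 * \<eta> k * Vg (Suc k) \<le> 2 * \<eta> k * (tg (Suc k) + e (Suc k))"
          using Vg[OF fin] ep by (simp add: mult_left_mono)
        also have "\<dots> = 2 * \<eta> k * tg (Suc k) + 2 * \<eta> k * e (Suc k)" by (simp add: algebra_simps)
        also have "2 * \<eta> k * tg (Suc k) \<le> A (Suc k)"
        proof -
          have "(2::real) \<le> 2 ^ Suc k" by simp
          hence "2 * \<eta> k * tg (Suc k) \<le> 2 ^ Suc k * \<eta> k * tg (Suc k)"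
            using ep tg0[of "Suc k"] by (intro mult_right_mono) auto
          also have "\<dots> \<le> A (Suc k)" using Aall[of "Suc k"] by (simp add: cf_def)
          finally show ?thesis .
        qed
        also have "2 * \<eta> k * e (Suc k) \<le> 2 * \<eta> 0 * e (Suc k)"
          using eta0[of k] e0[of "Suc k"] by simp
        finally show ?thesis by simp
      qed
      finally show ?thesis .
    qed
    have b2: "\<bar>RS (F k) (\<lambda>t. G (Suc k) t - G k t) l x \<nu>\<bar> \<le> \<theta> k * tf k + \<theta> (Suc k) * tf (Suc k) + 2 * \<theta> 0 * e k" for k
    proof (cases "\<theta> k = 0")
      case True
      hence tS: "\<theta> (Suc k) = 0" using thetaS[of k] theta(1) by (metis order_antisym)
      have "RS (F k) (\<lambda>t. G (Suc k) t - G k t) l x \<nu> = 0" unfolding RS_def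
      proof (rule sum.neutral, rule ballI)
        fix i assume i: "i \<in> {..<l}"
        have "\<forall>t\<in>{c..d}. G (Suc k) t = g t"
        proof
          fix t assume "t \<in> {c..d}"
          hence "\<bar>g t - G (Suc k) t\<bar> \<le> \<theta> (Suc k) / 2" using G by blast
          thus "G (Suc k) t = g t" using tS by simp
        qed
        moreover have "\<forall>t\<in>{c..d}. G k t = g t"
        proof
          fix t assume "t \<in> {c..d}"
          hence "\<bar>g t - G k t\<bar> \<le> \<theta> k / 2" using G by blast
          thus "G k t = g t" using True by simp
        qed
        moreover have "x i \<in> {c..d}" "x (Suc i) \<in> {c..d}" using xin i by auto
        ultimately show "F k (\<nu> i) * (G (Suc k) (x (Suc i)) - G k (x (Suc i)) - (G (Suc k) (x i) - G k (x i))) = 0"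
          by simp
      qed
      thus ?thesis using tf0 theta(1) e0[of k] by (simp add: add_nonneg_nonneg)
    next
      case False
      hence tp: "0 < \<theta> k" using theta(1) by (metis less_eq_real_def)
      hence fin: "truncated_variation f c d (\<eta> k) \<noteq> \<infinity>" using Ball[of k] by simp
      have tvF: "total_variation (F k) c d \<le> ereal (tf k + e k)" using F fin by blast
      have W: "\<forall>s\<in>{c..d}. \<forall>t\<in>{c..d}. \<bar>(G (Suc k) s - G k s) - (G (Suc k) t - G k t)\<bar> \<le> \<theta> k + \<theta> (Suc k)"
      proof (intro ballI)
        fix s t assume s: "s \<in> {c..d}" and t: "t \<in> {c..d}"
        have "\<bar>g s - G (Suc k) s\<bar> \<le> \<theta> (Suc k) / 2" "\<bar>g s - G k s\<bar> \<le> \<theta> k / 2"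
             "\<bar>g t - G (Suc k) t\<bar> \<le> \<theta> (Suc k) / 2" "\<bar>g t - G k t\<bar> \<le> \<theta> k / 2"
          using G s t by blast+
        thus "\<bar>(G (Suc k) s - G k s) - (G (Suc k) t - G k t)\<bar> \<le> \<theta> k + \<theta> (Suc k)" by linarith
      qed
      have "\<bar>RS (F k) (\<lambda>t. G (Suc k) t - G k t) l x \<nu>\<bar> \<le> (\<theta> k + \<theta> (Suc k)) * (tf k + e k)"
        by (rule RS_abel_bound[OF P _ W tvF]) (use F in blast)
      also have "\<dots> = \<theta> k * tf k + \<theta> (Suc k) * tf k + (\<theta> k + \<theta> (Suc k)) * e k" by (simp add: algebra_simps)
      also have "\<theta> (Suc k) * tf k \<le> \<theta> (Suc k) * tf (Suc k)"
      proof (cases "\<theta> (Suc k) = 0")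
        case True thus ?thesis by simp
      next
        case False
        hence "0 < \<theta> (Suc k)" using theta(1) by (metis less_eq_real_def)
        hence finS: "truncated_variation f c d (\<eta> (Suc k)) \<noteq> \<infinity>" using Ball[of "Suc k"] by simp
        have "truncated_variation f c d (\<eta> k) \<le> truncated_variation f c d (\<eta> (Suc k))"
          by (rule trunc_mono[OF etaS])
        hence "tf k \<le> tf (Suc k)" unfolding tf_def
          by (rule real_of_ereal_positive_mono[OF trunc_nonneg _ finS])
        thus ?thesis using theta(1) by (simp add: mult_left_mono)
      qed
      also have "(\<theta> k + \<theta> (Suc k)) * e k \<le> 2 * \<theta> 0 * e k"
      proof -
        have "\<theta> k + \<theta> (Suc k) \<le> 2 * \<theta> 0" using theta0[of k] theta0[of "Suc k"] by simp
        thus ?thesis using e0[of k] by (simp add: mult_right_mono)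
      qed
      finally show ?thesis by simp
    qed
    have lim: "(\<lambda>n. \<eta> n * V0 + M * (real l * \<theta> n)) \<longlonglongrightarrow> 0 * V0 + M * (real l * 0)"
      by (intro tendsto_intros eta(3) theta(3))
    hence "\<forall>\<^sub>F n in sequentially. \<eta> n * V0 + M * (real l * \<theta> n) < \<epsilon>"
      using \<epsilon> by (simp add: order_tendstoD(2))
    then obtain n where n: "\<eta> n * V0 + M * (real l * \<theta> n) < \<epsilon>" by (auto simp: eventually_sequentially)
    have conv: "\<bar>RS Fo g l x \<nu> - RS (F n) (G n) l x \<nu>\<bar> \<le> \<eta> n * V0 + M * (real l * \<theta> n)"
    proof -
      have split: "RS Fo g l x \<nu> - RS (F n) (G n) l x \<nu> =
          RS (\<lambda>t. Fo t - F n t) g l x \<nu> + RS (F n) (\<lambda>t. g t - G n t) l x \<nu>"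
        unfolding RS_def by (simp add: sum_subtractf[symmetric] sum.distrib[symmetric] algebra_simps)
      have t1: "\<bar>RS (\<lambda>t. Fo t - F n t) g l x \<nu>\<bar> \<le> \<eta> n * V0" unfolding V0_def
        by (rule RS_bound_sup) (use F nuin in \<open>auto simp: Fo_def\<close>)
      have "\<bar>RS (F n) (\<lambda>t. g t - G n t) l x \<nu>\<bar> \<le> M * (\<Sum>i<l. \<bar>(g (x (Suc i)) - G n (x (Suc i))) - (g (x i) - G n (x i))\<bar>)"
        by (rule RS_bound_sup) (use F nuin in auto)
      also have "\<dots> \<le> M * (\<Sum>i<l. \<theta> n)"
      proof (intro mult_left_mono[OF _ M(2)] sum_mono)
        fix i assume i: "i \<in> {..<l}"
        have "\<bar>g (x (Suc i)) - G n (x (Suc i))\<bar> \<le> \<theta> n / 2" "\<bar>g (x i) - G n (x i)\<bar> \<le> \<theta> n / 2"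
          using G xin[of "Suc i"] xin[of i] i by auto
        thus "\<bar>(g (x (Suc i)) - G n (x (Suc i))) - (g (x i) - G n (x i))\<bar> \<le> \<theta> n" by linarith
      qed
      finally have t2: "\<bar>RS (F n) (\<lambda>t. g t - G n t) l x \<nu>\<bar> \<le> M * (real l * \<theta> n)" by simp
      show ?thesis unfolding split using t1 t2 by linarith
    qed
    have exp: "RS (F n) (G n) l x \<nu> = RS (F 0) (G 0) l x \<nu> +
      (\<Sum>k<n. RS (\<lambda>t. F (Suc k) t - F k t) (G (Suc k)) l x \<nu> + RS (F k) (\<lambda>t. G (Suc k) t - G k t) l x \<nu>)"
      by (rule RS_expand)
    have "\<bar>RS (F n) (G n) l x \<nu>\<bar> \<le> \<bar>RS (F 0) (G 0) l x \<nu>\<bar> +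
      (\<Sum>k<n. \<bar>RS (\<lambda>t. F (Suc k) t - F k t) (G (Suc k)) l x \<nu>\<bar> + \<bar>RS (F k) (\<lambda>t. G (Suc k) t - G k t) l x \<nu>\<bar>)"
    proof -
      have "\<bar>\<Sum>k<n. RS (\<lambda>t. F (Suc k) t - F k t) (G (Suc k)) l x \<nu> + RS (F k) (\<lambda>t. G (Suc k) t - G k t) l x \<nu>\<bar>
          \<le> (\<Sum>k<n. \<bar>RS (\<lambda>t. F (Suc k) t - F k t) (G (Suc k)) l x \<nu> + RS (F k) (\<lambda>t. G (Suc k) t - G k t) l x \<nu>\<bar>)"
        by (rule sum_abs)
      also have "\<dots> \<le> (\<Sum>k<n. \<bar>RS (\<lambda>t. F (Suc k) t - F k t) (G (Suc k)) l x \<nu>\<bar> + \<bar>RS (F k) (\<lambda>t. G (Suc k) t - G k t) l x \<nu>\<bar>)"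
        by (rule sum_mono) (rule abs_triangle_ineq)
      finally show ?thesis unfolding exp by linarith
    qed
    also have "\<dots> \<le> (A 0 + M * e 0) + (\<Sum>k<n. (A (Suc k) + 2 * \<eta> 0 * e (Suc k)) +
        (\<theta> k * tf k + \<theta> (Suc k) * tf (Suc k) + 2 * \<theta> 0 * e k))"
      by (intro add_mono b0 sum_mono b1 b2)
    also have "\<dots> = (A 0 + (\<Sum>k<n. A (Suc k))) + (\<Sum>k<n. \<theta> k * tf k + \<theta> (Suc k) * tf (Suc k)) +
        (M * e 0 + 2 * \<eta> 0 * (\<Sum>k<n. e (Suc k)) + 2 * \<theta> 0 * (\<Sum>k<n. e k))"
      by (simp add: sum.distrib sum_distrib_left algebra_simps)
    also have "A 0 + (\<Sum>k<n. A (Suc k)) \<le> suminf A"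
    proof -
      have "A 0 + (\<Sum>k<n. A (Suc k)) = (\<Sum>k<Suc n. A k)" by (subst sum.lessThan_Suc_shift) simp
      also have "\<dots> \<le> suminf A" by (rule sum_le_suminf[OF A(1)]) (use Aall in auto)
      finally show ?thesis .
    qed
    also have "(\<Sum>k<n. \<theta> k * tf k + \<theta> (Suc k) * tf (Suc k)) \<le> suminf B"
    proof -
      have "(\<Sum>k<n. \<theta> k * tf k + \<theta> (Suc k) * tf (Suc k)) \<le> (\<Sum>k<Suc n. 2 ^ k * (\<theta> k * tf k))"
        by (rule sum_double_le[of "\<lambda>k. \<theta> k * tf k"]) (use theta(1) tf0 in auto)
      also have "\<dots> \<le> (\<Sum>k<Suc n. B k)" by (rule sum_mono) (use Ball in \<open>auto simp: mult.assoc\<close>)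
      also have "\<dots> \<le> suminf B" by (rule sum_le_suminf[OF B(1)]) (use Ball in auto)
      finally show ?thesis .
    qed
    also have "M * e 0 + 2 * \<eta> 0 * (\<Sum>k<n. e (Suc k)) + 2 * \<theta> 0 * (\<Sum>k<n. e k) \<le> \<epsilon>"
    proof -
      have s1: "(\<Sum>k<m. e k) \<le> \<epsilon> / K" for m
      proof -
        have "(\<Sum>k<m. e k) = \<epsilon> / K * (\<Sum>k<m. (1/2) ^ Suc k)" by (simp add: e_def sum_distrib_left)
        also have "\<dots> \<le> \<epsilon> / K * 1" using geom_half[of m] \<epsilon> K0 by (intro mult_left_mono) auto
        finally show ?thesis by simp
      qed
      have s2: "(\<Sum>k<n. e (Suc k)) \<le> \<epsilon> / K"
      proof -
        have "(\<Sum>k<Suc n. e k) = e 0 + (\<Sum>k<n. e (Suc k))" by (subst sum.lessThan_Suc_shift) simp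
        hence "(\<Sum>k<n. e (Suc k)) \<le> (\<Sum>k<Suc n. e k)" using e0[of 0] by simp
        thus ?thesis using s1[of "Suc n"] by linarith
      qed
      have s0: "e 0 \<le> \<epsilon> / K" using \<epsilon> K0 by (simp add: e_def frac_le)
      have "M * e 0 + 2 * \<eta> 0 * (\<Sum>k<n. e (Suc k)) + 2 * \<theta> 0 * (\<Sum>k<n. e k)
          \<le> M * (\<epsilon> / K) + 2 * \<eta> 0 * (\<epsilon> / K) + 2 * \<theta> 0 * (\<epsilon> / K)"
        using s0 s1 s2 M(2) eta(1) theta(1)
        by (intro add_mono mult_left_mono) auto
      also have "\<dots> = (M + 2 * \<eta> 0 + 2 * \<theta> 0) * (\<epsilon> / K)" by (simp only: distrib_right)
      also have "\<dots> = (K - 1) * (\<epsilon> / K)" by (simp add: K_def)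
      also have "\<dots> \<le> K * (\<epsilon> / K)" using \<epsilon> K0 by (intro mult_right_mono) auto
      also have "\<dots> = \<epsilon>" using K0 by simp
      finally show ?thesis .
    qed
    finally have "\<bar>RS (F n) (G n) l x \<nu>\<bar> \<le> suminf A + suminf B + \<epsilon>" by simp
    thus ?thesis using conv n by linarith
  qed
  have fin: "\<bar>RS Fo g l x \<nu>\<bar> \<le> suminf A + suminf B"
  proof (rule field_le_epsilon)
    fix \<epsilon> :: real assume "0 < \<epsilon>"
    thus "\<bar>RS Fo g l x \<nu>\<bar> \<le> suminf A + suminf B + \<epsilon>" using main[of "\<epsilon> / 2"] by simp
  qed
  have "RS Fo g l x \<nu> = RS f g l x \<nu> - f c * (g d - g c)"
  proof -
    have "RS Fo g l x \<nu> = RS f g l x \<nu> - (\<Sum>i<l. f c * (g (x (Suc i)) - g (x i)))"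
      unfolding RS_def Fo_def by (simp add: sum_subtractf[symmetric] algebra_simps)
    also have "(\<Sum>i<l. f c * (g (x (Suc i)) - g (x i))) = f c * (g d - g c)"
      using RS_telescope[of "f c" g x l] P by (simp add: ispart_def)
    finally show ?thesis .
  qed
  thus ?thesis using fin by simp
qed

lemma left_nbhd:
  fixes f :: "real \<Rightarrow> real" and x L :: real
  assumes "(f \<longlongrightarrow> L) (at_left x)" "0 < e"
  shows "\<exists>r>0. \<forall>y. x - r < y \<and> y < x \<longrightarrow> \<bar>f y - L\<bar> < (e::real)"
proof -
  have "eventually (\<lambda>y. dist (f y) L < e) (at_left x)" using assms tendsto_iff by blast
  then obtain b where b: "b < x" "\<forall>y>b. y < x \<longrightarrow> dist (f y) L < e"
    unfolding eventually_at_left_field by blast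
  show ?thesis by (rule exI[of _ "x - b"]) (use b in \<open>auto simp: dist_real_def\<close>)
qed

lemma right_nbhd:
  fixes f :: "real \<Rightarrow> real" and x L :: real
  assumes "(f \<longlongrightarrow> L) (at_right x)" "0 < e"
  shows "\<exists>r>0. \<forall>y. x < y \<and> y < x + r \<longrightarrow> \<bar>f y - L\<bar> < (e::real)"
proof -
  have "eventually (\<lambda>y. dist (f y) L < e) (at_right x)" using assms tendsto_iff by blast
  then obtain b where b: "x < b" "\<forall>y>x. y < b \<longrightarrow> dist (f y) L < e"
    unfolding eventually_at_right_field by blast
  show ?thesis by (rule exI[of _ "b - x"]) (use b in \<open>auto simp: dist_real_def\<close>)
qed

lemma cont_nbhd:
  fixes f :: "real \<Rightarrow> real" and x :: real
  assumes "continuous (at x within S) f" "0 < e"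
  shows "\<exists>r>0. \<forall>y\<in>S. \<bar>y - x\<bar> < r \<longrightarrow> \<bar>f y - f x\<bar> < (e::real)"
proof -
  have "(f \<longlongrightarrow> f x) (at x within S)" using assms(1) continuous_within by blast
  then obtain r where r: "r > 0" "\<forall>y\<in>S. 0 < dist y x \<and> dist y x < r \<longrightarrow> dist (f y) (f x) < e"
    using assms(2) unfolding Lim_within by blast
  show ?thesis
  proof (rule exI[of _ r], intro conjI ballI impI)
    fix y assume "y \<in> S" "\<bar>y - x\<bar> < r"
    thus "\<bar>f y - f x\<bar> < e" using r assms(2) by (cases "y = x") (auto simp: dist_real_def)
  qed (use r in simp)
qed

lemma regulated_cover:
  fixes f :: "real \<Rightarrow> real"
  assumes reg: "regulated f a b" and ab: "a \<le> b" and e: "0 < e"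
  shows "\<exists>D \<delta> Bd. finite D \<and> D \<subseteq> {a..b} \<and> 0 < \<delta> \<and>
     (\<forall>p\<in>D. \<not> continuous (at p within {a..b}) f) \<and>
     (\<forall>s t. a \<le> s \<longrightarrow> s \<le> t \<longrightarrow> t \<le> b \<longrightarrow> t - s < \<delta> \<longrightarrow> (\<forall>p\<in>D. p < s \<or> t < p) \<longrightarrow> \<bar>f s - f t\<bar> \<le> e) \<and>
     (\<forall>t\<in>{a..b}. \<bar>f t\<bar> \<le> Bd)"
proof -
  have leftlim: "\<exists>L. (f \<longlongrightarrow> L) (at_left x)" if "a < x" "x \<le> b" for x
    using reg that unfolding regulated_def by (cases "x = b") auto
  have rightlim: "\<exists>L. (f \<longlongrightarrow> L) (at_right x)" if "a \<le> x" "x < b" for x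
    using reg that unfolding regulated_def by (cases "x = a") auto
  define Lm where "Lm x = (SOME L. (f \<longlongrightarrow> L) (at_left x))" for x
  define Lp where "Lp x = (SOME L. (f \<longlongrightarrow> L) (at_right x))" for x
  have Lm: "(f \<longlongrightarrow> Lm x) (at_left x)" if "a < x" "x \<le> b" for x
    using leftlim[OF that] unfolding Lm_def by (rule someI_ex)
  have Lp: "(f \<longlongrightarrow> Lp x) (at_right x)" if "a \<le> x" "x < b" for x
    using rightlim[OF that] unfolding Lp_def by (rule someI_ex)
  have e2: "0 < e / 2" using e by simp
  define Q where "Q x r \<longleftrightarrow> r > 0 \<and> (a < x \<longrightarrow> (\<forall>y. x - r < y \<and> y < x \<longrightarrow> \<bar>f y - Lm x\<bar> < e / 2)) \<and>
         (x < b \<longrightarrow> (\<forall>y. x < y \<and> y < x + r \<longrightarrow> \<bar>f y - Lp x\<bar> < e / 2)) \<and>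
         (continuous (at x within {a..b}) f \<longrightarrow> (\<forall>y\<in>{a..b}. \<bar>y - x\<bar> < r \<longrightarrow> \<bar>f y - f x\<bar> < e / 2))" for x r
  have "\<forall>x\<in>{a..b}. \<exists>r. Q x r"
  proof
    fix x assume x: "x \<in> {a..b}"
    obtain r1 where r1: "r1 > 0" "a < x \<longrightarrow> (\<forall>y. x - r1 < y \<and> y < x \<longrightarrow> \<bar>f y - Lm x\<bar> < e / 2)"
    proof (cases "a < x")
      case True
      hence "(f \<longlongrightarrow> Lm x) (at_left x)" using Lm x by simp
      then obtain r where "r > 0" "\<forall>y. x - r < y \<and> y < x \<longrightarrow> \<bar>f y - Lm x\<bar> < e / 2"
        using left_nbhd e2 by blast
      thus ?thesis using that by blast
    next
      case False thus ?thesis using that[of 1] by simp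
    qed
    obtain r2 where r2: "r2 > 0" "x < b \<longrightarrow> (\<forall>y. x < y \<and> y < x + r2 \<longrightarrow> \<bar>f y - Lp x\<bar> < e / 2)"
    proof (cases "x < b")
      case True
      hence "(f \<longlongrightarrow> Lp x) (at_right x)" using Lp x by simp
      then obtain r where "r > 0" "\<forall>y. x < y \<and> y < x + r \<longrightarrow> \<bar>f y - Lp x\<bar> < e / 2"
        using right_nbhd e2 by blast
      thus ?thesis using that by blast
    next
      case False thus ?thesis using that[of 1] by simp
    qed
    obtain r3 where r3: "r3 > 0" "continuous (at x within {a..b}) f \<longrightarrow> (\<forall>y\<in>{a..b}. \<bar>y - x\<bar> < r3 \<longrightarrow> \<bar>f y - f x\<bar> < e / 2)"
    proof (cases "continuous (at x within {a..b}) f")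
      case True
      then obtain r where "r > 0" "\<forall>y\<in>{a..b}. \<bar>y - x\<bar> < r \<longrightarrow> \<bar>f y - f x\<bar> < e / 2"
        using cont_nbhd[OF _ e2] by blast
      thus ?thesis using that by blast
    next
      case False thus ?thesis using that[of 1] by simp
    qed
    have "Q x (min r1 (min r2 r3))" unfolding Q_def using r1 r2 r3 by auto
    thus "\<exists>r. Q x r" by blast
  qed
  then obtain r where rQ: "\<forall>x\<in>{a..b}. Q x (r x)" using bchoice by blast
  have r: "\<forall>x\<in>{a..b}. r x > 0 \<and> (a < x \<longrightarrow> (\<forall>y. x - r x < y \<and> y < x \<longrightarrow> \<bar>f y - Lm x\<bar> < e / 2)) \<and>
         (x < b \<longrightarrow> (\<forall>y. x < y \<and> y < x + r x \<longrightarrow> \<bar>f y - Lp x\<bar> < e / 2)) \<and>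
         (continuous (at x within {a..b}) f \<longrightarrow> (\<forall>y\<in>{a..b}. \<bar>y - x\<bar> < r x \<longrightarrow> \<bar>f y - f x\<bar> < e / 2))"
    using rQ unfolding Q_def by simp
  have cov: "{a..b} \<subseteq> \<Union> ((\<lambda>x. ball x (r x / 2)) ` {a..b})"
  proof
    fix y assume y: "y \<in> {a..b}"
    hence "r y > 0" using r by blast
    hence "y \<in> ball y (r y / 2)" by simp
    thus "y \<in> \<Union> ((\<lambda>x. ball x (r x / 2)) ` {a..b})" using y by blast
  qed
  obtain C where C: "C \<subseteq> {a..b}" "finite C" "{a..b} \<subseteq> \<Union> ((\<lambda>x. ball x (r x / 2)) ` C)"
    using compactE_image[OF compact_Icc _ cov] by blast
  have Cne: "C \<noteq> {}" using C(3) ab by auto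
  define \<delta> where "\<delta> = Min (r ` C) / 2"
  have "\<forall>x\<in>C. 0 < r x" using C(1) r by blast
  hence "0 < Min (r ` C)" using C(2) Cne by simp
  hence \<delta>0: "0 < \<delta>" unfolding \<delta>_def by simp
  have \<delta>le: "\<delta> \<le> r x / 2" if "x \<in> C" for x unfolding \<delta>_def using C(2) that by simp
  define D where "D = {x\<in>C. \<not> continuous (at x within {a..b}) f}"
  define Bd where "Bd = (\<Sum>x\<in>C. \<bar>Lm x\<bar> + \<bar>Lp x\<bar> + \<bar>f x\<bar>) + e"
  have Bdterm: "\<bar>Lm x\<bar> + \<bar>Lp x\<bar> + \<bar>f x\<bar> \<le> (\<Sum>x\<in>C. \<bar>Lm x\<bar> + \<bar>Lp x\<bar> + \<bar>f x\<bar>)" if "x \<in> C" for x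
    by (rule member_le_sum) (use that C(2) in auto)
  show ?thesis
  proof (rule exI[of _ D], rule exI[of _ \<delta>], rule exI[of _ Bd], intro conjI allI impI ballI)
    show "finite D" using C(2) by (simp add: D_def)
    show "D \<subseteq> {a..b}" using C(1) by (auto simp: D_def)
    show "0 < \<delta>" by (rule \<delta>0)
    fix p assume "p \<in> D" thus "\<not> continuous (at p within {a..b}) f" by (simp add: D_def)
  next
    fix s t assume st: "a \<le> s" "s \<le> t" "t \<le> b" "t - s < \<delta>" "\<forall>p\<in>D. p < s \<or> t < p"
    obtain x where x: "x \<in> C" "s \<in> ball x (r x / 2)" using C(3) st by force
    have xab: "x \<in> {a..b}" using x C(1) by auto
    have sx: "\<bar>s - x\<bar> < r x / 2" using x by (simp add: dist_real_def abs_minus_commute)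
    have tx: "\<bar>t - x\<bar> < r x" using sx st \<delta>le[OF x(1)] by linarith
    have rx: "r x > 0" using r xab by blast
    consider "x < s" | "t < x" | "s \<le> x \<and> x \<le> t" by linarith
    then show "\<bar>f s - f t\<bar> \<le> e"
    proof cases
      case 1
      hence "x < b" using st by linarith
      hence "\<forall>y. x < y \<and> y < x + r x \<longrightarrow> \<bar>f y - Lp x\<bar> < e / 2" using r xab by blast
      hence "\<bar>f s - Lp x\<bar> < e / 2" "\<bar>f t - Lp x\<bar> < e / 2" using 1 sx tx st by auto
      thus ?thesis by linarith
    next
      case 2
      hence "a < x" using st by linarith
      hence "\<forall>y. x - r x < y \<and> y < x \<longrightarrow> \<bar>f y - Lm x\<bar> < e / 2" using r xab by blast
      hence "\<bar>f s - Lm x\<bar> < e / 2" "\<bar>f t - Lm x\<bar> < e / 2" using 2 sx tx st by auto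
      thus ?thesis by linarith
    next
      case 3
      hence "x \<notin> D" using st(5) by force
      hence "continuous (at x within {a..b}) f" using x(1) by (simp add: D_def)
      hence "\<forall>y\<in>{a..b}. \<bar>y - x\<bar> < r x \<longrightarrow> \<bar>f y - f x\<bar> < e / 2" using r xab by blast
      hence "\<bar>f s - f x\<bar> < e / 2" "\<bar>f t - f x\<bar> < e / 2" using sx tx st rx by auto
      thus ?thesis by linarith
    qed
  next
    fix t assume t: "t \<in> {a..b}"
    obtain x where x: "x \<in> C" "t \<in> ball x (r x / 2)" using C(3) t by force
    have xab: "x \<in> {a..b}" using x C(1) by auto
    have tx: "\<bar>t - x\<bar> < r x / 2" using x by (simp add: dist_real_def abs_minus_commute)
    have rx: "r x > 0" using r xab by blast
    have "\<bar>f t\<bar> \<le> \<bar>Lm x\<bar> + \<bar>Lp x\<bar> + \<bar>f x\<bar> + e"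
    proof -
      consider "t < x" | "x < t" | "t = x" by linarith
      then show ?thesis
      proof cases
        case 1
        hence "a < x" using t by simp
        hence "\<bar>f t - Lm x\<bar> < e / 2" using r xab 1 tx by auto
        thus ?thesis by linarith
      next
        case 2
        hence "x < b" using t by simp
        hence "\<bar>f t - Lp x\<bar> < e / 2" using r xab 2 tx by auto
        thus ?thesis by linarith
      next
        case 3 thus ?thesis using e by simp
      qed
    qed
    thus "\<bar>f t\<bar> \<le> Bd" using Bdterm[OF x(1)] unfolding Bd_def by linarith
  qed
qed

lemma tv_mono_comp_finite:
  fixes h \<pi> :: "real \<Rightarrow> real"
  assumes mono: "\<And>s t. a \<le> s \<Longrightarrow> s \<le> t \<Longrightarrow> t \<le> b \<Longrightarrow> \<pi> s \<le> \<pi> t"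
    and V: "\<pi> ` {a..b} \<subseteq> V" "finite V" and Bd: "\<forall>v\<in>V. \<bar>h v\<bar> \<le> Bd"
  shows "total_variation (\<lambda>t. h (\<pi> t)) a b \<le> ereal (2 * Bd * card V)"
proof (rule tv_least)
  fix n t assume t: "\<forall>i<n. a \<le> t i \<and> t i \<le> b" "\<forall>i. Suc i < n \<longrightarrow> t i < t (Suc i)"
  let ?g = "\<lambda>i. \<bar>h (\<pi> (t (Suc i))) - h (\<pi> (t i))\<bar>"
  define Cg where "Cg = {i. i < n - 1 \<and> \<pi> (t i) \<noteq> \<pi> (t (Suc i))}"
  have tin: "\<pi> (t i) \<in> V" if "i < n" for i using V(1) t(1) that by auto
  have tmono: "t i \<le> t j" if "i \<le> j" "j < n" for i j
  proof -
    have "\<forall>k<n - 1. t k \<le> t (Suc k)" using t(2) by (simp add: less_imp_le)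
    from chain_mono[OF this, of i j] that show ?thesis by simp
  qed
  have "(\<Sum>i<n - 1. ?g i) = (\<Sum>i\<in>Cg. ?g i)"
    by (rule sum.mono_neutral_right) (auto simp: Cg_def)
  also have "\<dots> \<le> (\<Sum>i\<in>Cg. 2 * Bd)"
  proof (rule sum_mono)
    fix i assume i: "i \<in> Cg"
    hence "i < n" "Suc i < n" by (auto simp: Cg_def)
    hence "\<bar>h (\<pi> (t (Suc i)))\<bar> \<le> Bd" "\<bar>h (\<pi> (t i))\<bar> \<le> Bd" using tin Bd by auto
    thus "?g i \<le> 2 * Bd" by linarith
  qed
  also have "\<dots> = 2 * Bd * card Cg" by simp
  also have "\<dots> \<le> 2 * Bd * card V"
  proof (cases "n = 0")
    case True
    hence "Cg = {}" by (simp add: Cg_def)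
    thus ?thesis using Bd V by (cases "V = {}") (auto intro: mult_nonneg_nonneg)
  next
    case False
    have "card Cg \<le> card V"
    proof (rule card_inj_on_le[of "\<lambda>i. \<pi> (t (Suc i))"])
      show "inj_on (\<lambda>i. \<pi> (t (Suc i))) Cg"
      proof (rule linorder_inj_onI)
        fix i j assume ij: "i < j" "i \<in> Cg" "j \<in> Cg"
        have jn: "Suc j < n" using ij by (auto simp: Cg_def)
        have "\<pi> (t (Suc i)) \<le> \<pi> (t j)"
          using mono t(1) tmono[of "Suc i" j] ij jn by auto
        moreover have "\<pi> (t j) < \<pi> (t (Suc j))"
        proof -
          have "\<pi> (t j) \<le> \<pi> (t (Suc j))" using mono t jn by (meson Suc_lessD less_imp_le)
          thus ?thesis using ij by (auto simp: Cg_def)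
        qed
        ultimately show "\<pi> (t (Suc i)) \<noteq> \<pi> (t (Suc j))" by simp
      qed auto
      show "(\<lambda>i. \<pi> (t (Suc i))) ` Cg \<subseteq> V" using tin by (auto simp: Cg_def)
      show "finite V" by (rule V(2))
    qed
    moreover have "0 \<le> Bd"
    proof -
      have "\<pi> (t 0) \<in> V" using tin False by simp
      thus ?thesis using Bd by force
    qed
    ultimately show ?thesis by (simp add: mult_left_mono)
  qed
  finally show "ereal (\<Sum>i<n - 1. ?g i) \<le> ereal (2 * Bd * card V)" by simp
qed


lemma trunc_finite:
  fixes h :: "real \<Rightarrow> real"
  assumes reg: "regulated h a b" and ab: "a \<le> b" and del: "0 < \<delta>"
  shows "truncated_variation h a b \<delta> \<noteq> \<infinity>"
proof -
  have d2: "0 < \<delta> / 2" using del by simp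
  obtain D \<delta>0 Bd where D: "finite D" "D \<subseteq> {a..b}" "0 < \<delta>0"
     "\<forall>s t. a \<le> s \<longrightarrow> s \<le> t \<longrightarrow> t \<le> b \<longrightarrow> t - s < \<delta>0 \<longrightarrow> (\<forall>p\<in>D. p < s \<or> t < p) \<longrightarrow> \<bar>h s - h t\<bar> \<le> \<delta> / 2"
     "\<forall>t\<in>{a..b}. \<bar>h t\<bar> \<le> Bd"
    using regulated_cover[OF reg ab d2] by (elim exE conjE) blast
  obtain N :: nat where N: "(b - a) / \<delta>0 < real N" using reals_Archimedean2 by blast
  have "0 \<le> (b - a) / \<delta>0" using ab D(3) by simp
  hence "0 < real N" using N by linarith
  hence N1: "0 < N" by simp
  define st where "st = (b - a) / N"
  have st0: "0 \<le> st" using ab by (simp add: st_def)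
  have "b - a < real N * \<delta>0" using N D(3) by (simp add: pos_divide_less_eq)
  hence stlt: "st < \<delta>0" unfolding st_def using N1 by (simp add: pos_divide_less_eq mult.commute)
  define Gr where "Gr = (\<lambda>j. a + real j * st) ` {..N}"
  define T where "T = D \<union> Gr"
  have grid_in: "a + real j * st \<in> T" if "j \<le> N" for j using that by (auto simp: T_def Gr_def)
  have gN: "a + real N * st = b" using N1 by (simp add: st_def)
  have aT: "a \<in> T" using grid_in[of 0] by simp
  have bT: "b \<in> T" using grid_in[of N] gN by simp
  have Tfin: "finite T" by (simp add: T_def Gr_def D(1))
  have Tab: "T \<subseteq> {a..b}"
  proof -
    have "a + real j * st \<in> {a..b}" if "j \<le> N" for j
    proof -
      have "real j * st \<le> real N * st" using that st0 by (simp add: mult_right_mono)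
      thus ?thesis using gN st0 by simp
    qed
    thus ?thesis using D(2) by (auto simp: T_def Gr_def)
  qed
  define lo where "lo t = Max {s\<in>T. s \<le> t}" for t
  define hi where "hi t = Min {s\<in>T. t \<le> s}" for t
  define \<pi> where "\<pi> t = (lo t + hi t) / 2" for t
  have fin1: "finite {s\<in>T. s \<le> t}" "finite {s\<in>T. t \<le> s}" for t using Tfin by auto
  have ne1: "{s\<in>T. s \<le> t} \<noteq> {}" "{s\<in>T. t \<le> s} \<noteq> {}" if "t \<in> {a..b}" for t
    using aT bT that by auto
  have lo12: "lo t \<in> {s\<in>T. s \<le> t}" if "t \<in> {a..b}" for t
    unfolding lo_def by (rule Max_in[OF fin1(1) ne1(1)[OF that]])
  have lo3: "s \<le> lo t" if "s \<in> T" "s \<le> t" for s t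
    unfolding lo_def by (rule Max_ge[OF fin1(1)]) (use that in simp)
  have hi12: "hi t \<in> {s\<in>T. t \<le> s}" if "t \<in> {a..b}" for t
    unfolding hi_def by (rule Min_in[OF fin1(2) ne1(2)[OF that]])
  have hi3: "hi t \<le> s" if "s \<in> T" "t \<le> s" for s t
    unfolding hi_def by (rule Min_le[OF fin1(2)]) (use that in simp)
  have lo: "lo t \<in> T" "lo t \<le> t" "\<forall>s\<in>T. s \<le> t \<longrightarrow> s \<le> lo t" if "t \<in> {a..b}" for t
    using lo12[OF that] lo3 by auto
  have hi: "hi t \<in> T" "t \<le> hi t" "\<forall>s\<in>T. t \<le> s \<longrightarrow> hi t \<le> s" if "t \<in> {a..b}" for t
    using hi12[OF that] hi3 by auto
  have loT: "lo t = t" "hi t = t" if "t \<in> {a..b}" "t \<in> T" for t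
  proof -
    show "lo t = t" using lo(2)[OF that(1)] lo3[OF that(2), of t] by simp
    show "hi t = t" using hi(2)[OF that(1)] hi3[OF that(2), of t] by simp
  qed
  have gap: "hi t - lo t < \<delta>0" if t: "t \<in> {a..b}" for t
  proof -
    define J where "J = {j. j \<le> N \<and> a + real j * st \<le> t}"
    have Jfin: "finite J" by (simp add: J_def)
    have J0: "0 \<in> J" using t by (simp add: J_def)
    define j0 where "j0 = Max J"
    have j0J: "j0 \<in> J" using Jfin J0 unfolding j0_def by (metis Max_in empty_iff)
    have lo1: "a + real j0 * st \<le> lo t" using lo(3)[OF t] grid_in j0J by (auto simp: J_def)
    show ?thesis
    proof (cases "j0 < N")
      case True
      have "Suc j0 \<notin> J"
      proof
        assume "Suc j0 \<in> J"
        hence "Suc j0 \<le> j0" unfolding j0_def by (rule Max_ge[OF Jfin])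
        thus False by simp
      qed
      hence gt: "t < a + real (Suc j0) * st" using True by (auto simp: J_def)
      have "hi t \<le> a + real (Suc j0) * st" using hi(3)[OF t] grid_in[of "Suc j0"] True gt by auto
      hence "hi t - lo t \<le> st" using lo1 by (simp add: algebra_simps)
      thus ?thesis using stlt by simp
    next
      case False
      hence "j0 = N" using j0J by (simp add: J_def)
      hence "b \<le> t" using j0J gN by (simp add: J_def)
      hence "t = b" using t by simp
      hence "lo t = t" "hi t = t" using loT t bT by auto
      thus ?thesis using D(3) by simp
    qed
  qed
  have pimono: "\<pi> s \<le> \<pi> t" if "a \<le> s" "s \<le> t" "t \<le> b" for s t
  proof -
    have sab: "s \<in> {a..b}" "t \<in> {a..b}" using that by auto
    have "lo s \<le> lo t" unfolding lo_def
    proof (rule Max_mono)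
      show "{x \<in> T. x \<le> s} \<subseteq> {x \<in> T. x \<le> t}" using that by auto
    qed (use fin1 ne1[OF sab(1)] in auto)
    moreover have "hi s \<le> hi t" unfolding hi_def
    proof (rule Min_antimono)
      show "{x \<in> T. t \<le> x} \<subseteq> {x \<in> T. s \<le> x}" using that by auto
    qed (use fin1 ne1[OF sab(2)] in auto)
    ultimately show ?thesis by (simp add: \<pi>_def)
  qed
  define V where "V = (\<lambda>z. (fst z + snd z) / 2) ` (T \<times> T)"
  have Vfin: "finite V" unfolding V_def by (rule finite_imageI[OF finite_cartesian_product[OF Tfin Tfin]])
  have piV: "\<pi> ` {a..b} \<subseteq> V"
  proof
    fix y assume "y \<in> \<pi> ` {a..b}"
    then obtain t where t: "t \<in> {a..b}" "y = \<pi> t" by blast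
    have "(lo t, hi t) \<in> T \<times> T" using lo(1)[OF t(1)] hi(1)[OF t(1)] by simp
    moreover have "y = (\<lambda>z. (fst z + snd z) / 2) (lo t, hi t)" using t(2) by (simp add: \<pi>_def)
    ultimately show "y \<in> V" unfolding V_def by (rule rev_image_eqI)
  qed
  have VBd: "\<forall>v\<in>V. \<bar>h v\<bar> \<le> Bd"
  proof
    fix v assume "v \<in> V"
    then obtain z where z: "z \<in> T \<times> T" "v = (fst z + snd z) / 2" unfolding V_def by (rule imageE)
    have "fst z \<in> T" "snd z \<in> T" using z(1) by auto
    hence "a \<le> fst z" "fst z \<le> b" "a \<le> snd z" "snd z \<le> b" using Tab by auto
    hence "v \<in> {a..b}" using z(2) by simp
    thus "\<bar>h v\<bar> \<le> Bd" using D(5) by blast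
  qed
  have approx: "\<forall>t\<in>{a..b}. \<bar>h t - h (\<pi> t)\<bar> \<le> \<delta> / 2"
  proof
    fix t assume t: "t \<in> {a..b}"
    show "\<bar>h t - h (\<pi> t)\<bar> \<le> \<delta> / 2"
    proof (cases "t \<in> T")
      case True
      hence "lo t = t" "hi t = t" using loT t by auto
      hence "\<pi> t = t" by (simp add: \<pi>_def)
      thus ?thesis using del by simp
    next
      case False
      have lt: "lo t < t" "t < hi t" using lo[OF t] hi[OF t] False by (metis order_le_less)+
      have pin: "lo t < \<pi> t" "\<pi> t < hi t" using lt by (auto simp: \<pi>_def)
      have loa: "a \<le> lo t" using lo(1)[OF t] Tab by auto
      have hib: "hi t \<le> b" using hi(1)[OF t] Tab by auto
      have noD: "\<forall>p\<in>D. p < min t (\<pi> t) \<or> max t (\<pi> t) < p"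
      proof
        fix p assume p: "p \<in> D"
        hence pT: "p \<in> T" by (simp add: T_def)
        show "p < min t (\<pi> t) \<or> max t (\<pi> t) < p"
        proof (cases "p \<le> t")
          case True
          hence "p \<le> lo t" using lo(3)[OF t] pT by blast
          thus ?thesis using lt pin by simp
        next
          case False
          hence "hi t \<le> p" using hi(3)[OF t] pT by simp
          thus ?thesis using lt pin by simp
        qed
      qed
      have c1: "a \<le> min t (\<pi> t)" using loa lt pin by simp
      have c2: "min t (\<pi> t) \<le> max t (\<pi> t)" by simp
      have c3: "max t (\<pi> t) \<le> b" using hib lt pin by simp
      have c4: "max t (\<pi> t) - min t (\<pi> t) < \<delta>0" using gap[OF t] lt pin by linarith
      have "\<bar>h (min t (\<pi> t)) - h (max t (\<pi> t))\<bar> \<le> \<delta> / 2"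
        using D(4) c1 c2 c3 c4 noD by blast
      thus ?thesis
      proof (cases "t \<le> \<pi> t")
        case True thus ?thesis using \<open>\<bar>h (min t (\<pi> t)) - h (max t (\<pi> t))\<bar> \<le> \<delta> / 2\<close> by simp
      next
        case False thus ?thesis using \<open>\<bar>h (min t (\<pi> t)) - h (max t (\<pi> t))\<bar> \<le> \<delta> / 2\<close> by (simp add: abs_minus_commute)
      qed
    qed
  qed
  have "truncated_variation h a b \<delta> \<le> total_variation (\<lambda>t. h (\<pi> t)) a b"
    by (rule trunc_le_tv) (use approx in simp)
  also have "\<dots> \<le> ereal (2 * Bd * card V)" by (rule tv_mono_comp_finite[OF pimono piV Vfin VBd])
  finally show ?thesis by auto
qed

lemma sum_regroup:
  fixes \<phi> :: "nat \<Rightarrow> real" and p :: "nat \<Rightarrow> nat"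
  assumes "p 0 = 0" "\<forall>i<l. p i \<le> p (Suc i)"
  shows "(\<Sum>j<p l. \<phi> j) = (\<Sum>i<l. \<Sum>j\<in>{p i..<p (Suc i)}. \<phi> j)"
  using assms(2)
proof (induction l)
  case 0 thus ?case using assms(1) by simp
next
  case (Suc l)
  have "(\<Sum>j<p (Suc l). \<phi> j) = (\<Sum>j\<in>{0..<p l}. \<phi> j) + (\<Sum>j\<in>{p l..<p (Suc l)}. \<phi> j)"
    using Suc.prems by (subst sum.atLeastLessThan_concat) (auto simp: atLeast0LessThan)
  also have "(\<Sum>j\<in>{0..<p l}. \<phi> j) = (\<Sum>i<l. \<Sum>j\<in>{p i..<p (Suc i)}. \<phi> j)"
    using Suc by (simp add: atLeast0LessThan)
  finally show ?case by simp
qed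

lemma sum_shift_range:
  fixes \<phi> :: "nat \<Rightarrow> real"
  shows "(\<Sum>k<n. \<phi> (m + k)) = (\<Sum>j\<in>{m..<m + n}. \<phi> j)"
  by (induction n) auto

lemma strict_chain:
  fixes y :: "nat \<Rightarrow> real"
  assumes "\<forall>i<L. y i < y (Suc i)" "i < j" "j \<le> L"
  shows "y i < y j"
  using assms(2,3)
proof (induction j)
  case 0 thus ?case by simp
next
  case (Suc j)
  show ?case
  proof (cases "i = j")
    case True thus ?thesis using assms(1) Suc.prems by simp
  next
    case False
    hence "y i < y j" using Suc by simp
    moreover have "y j < y (Suc j)" using assms(1) Suc.prems by simp
    ultimately show ?thesis by linarith
  qed
qed

lemma refine:
  fixes f g :: "real \<Rightarrow> real"
  assumes P: "ispart a b l x \<nu>" and Q: "ispart a b L y \<mu>" and sub: "x ` {..l} \<subseteq> y ` {..L}"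
    and s: "\<And>i L' y' \<mu>'. i < l \<Longrightarrow> ispart (x i) (x (Suc i)) L' y' \<mu>' \<Longrightarrow>
       \<bar>RS f g L' y' \<mu>' - f (x i) * (g (x (Suc i)) - g (x i))\<bar> \<le> s i"
  shows "\<bar>RS f g l x \<nu> - RS f g L y \<mu>\<bar> \<le> 2 * (\<Sum>i<l. s i)"
proof -
  have ystrict: "\<forall>i<L. y i < y (Suc i)" using Q by (simp add: ispart_def)
  have yinj: "i = j" if "i \<le> L" "j \<le> L" "y i = y j" for i j
    using strict_chain[OF ystrict, of i j] strict_chain[OF ystrict, of j i] that by (metis less_irrefl nat_neq_iff)
  have exj: "\<exists>j. j \<le> L \<and> y j = x i" if "i \<le> l" for i
  proof -
    have "x i \<in> y ` {..L}" using sub that by blast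
    then obtain j where "j \<in> {..L}" "x i = y j" by (rule imageE)
    thus ?thesis by auto
  qed
  define p where "p i = (THE j. j \<le> L \<and> y j = x i)" for i
  have p: "p i \<le> L \<and> y (p i) = x i" if il: "i \<le> l" for i
  proof -
    obtain j where j: "j \<le> L" "y j = x i" using exj[OF il] by blast
    have "(THE j. j \<le> L \<and> y j = x i) = j" by (rule the_equality) (use j yinj in auto)
    thus ?thesis using j by (simp add: p_def)
  qed
  have p0: "p 0 = 0" using p[of 0] yinj[of "p 0" 0] P Q by (simp add: ispart_def)
  have pl: "p l = L" using p[of l] yinj[of "p l" L] P Q by (simp add: ispart_def)
  have pmono: "p i < p (Suc i)" if "i < l" for i
  proof (rule ccontr)
    assume "\<not> p i < p (Suc i)"
    hence le: "p (Suc i) \<le> p i" by simp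
    have "y (p (Suc i)) \<le> y (p i)"
    proof (cases "p (Suc i) = p i")
      case True thus ?thesis by simp
    next
      case False
      hence "p (Suc i) < p i" using le by simp
      thus ?thesis using strict_chain[OF ystrict, of "p (Suc i)" "p i"] p[of i] that by simp
    qed
    moreover have "x i < x (Suc i)" using P that by (simp add: ispart_def)
    ultimately show False using p[of i] p[of "Suc i"] that by simp
  qed
  define \<phi> where "\<phi> j = f (\<mu> j) * (g (y (Suc j)) - g (y j))" for j
  have RSQ: "RS f g L y \<mu> = (\<Sum>i<l. \<Sum>j\<in>{p i..<p (Suc i)}. \<phi> j)"
  proof -
    have "RS f g L y \<mu> = (\<Sum>j<p l. \<phi> j)" unfolding RS_def \<phi>_def pl ..
    also have "\<dots> = (\<Sum>i<l. \<Sum>j\<in>{p i..<p (Suc i)}. \<phi> j)"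
      by (rule sum_regroup[where p=p, OF p0]) (use pmono in \<open>auto simp: less_imp_le\<close>)
    finally show ?thesis .
  qed
  have termb: "\<bar>f (\<nu> i) * (g (x (Suc i)) - g (x i)) - (\<Sum>j\<in>{p i..<p (Suc i)}. \<phi> j)\<bar> \<le> 2 * s i" if i: "i < l" for i
  proof -
    define L' where "L' = p (Suc i) - p i"
    define y' where "y' k = y (p i + k)" for k
    define \<mu>' where "\<mu>' k = \<mu> (p i + k)" for k
    have pS: "p i + L' = p (Suc i)" using pmono[OF i] by (simp add: L'_def)
    have Q': "ispart (x i) (x (Suc i)) L' y' \<mu>'"
      unfolding ispart_def
    proof (intro conjI allI impI)
      show "y' 0 = x i" using p[of i] i by (simp add: y'_def)
      show "y' L' = x (Suc i)" using p[of "Suc i"] i pS by (simp add: y'_def)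
      fix k assume k: "k < L'"
      have kL: "p i + k < L" using k pS p[of "Suc i"] i by simp
      show "y' k < y' (Suc k)" using ystrict kL by (simp add: y'_def)
      show "y' k \<le> \<mu>' k" using Q kL by (simp add: ispart_def y'_def \<mu>'_def)
      show "\<mu>' k \<le> y' (Suc k)" using Q kL by (simp add: ispart_def y'_def \<mu>'_def)
    qed
    have RSQ': "RS f g L' y' \<mu>' = (\<Sum>j\<in>{p i..<p (Suc i)}. \<phi> j)"
      unfolding RS_def y'_def \<mu>'_def
      using sum_shift_range[where \<phi>="\<lambda>j. f (\<mu> j) * (g (y (Suc j)) - g (y j))" and n=L' and m="p i"] pS
      by (simp add: \<phi>_def)
    define y1 where "y1 k = (if k = 0 then x i else x (Suc i))" for k :: nat
    have T1: "ispart (x i) (x (Suc i)) 1 y1 (\<lambda>_. \<nu> i)"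
      using P i by (simp add: ispart_def y1_def)
    have RST: "RS f g 1 y1 (\<lambda>_. \<nu> i) = f (\<nu> i) * (g (x (Suc i)) - g (x i))"
      by (simp add: RS_def y1_def)
    have "\<bar>RS f g 1 y1 (\<lambda>_. \<nu> i) - f (x i) * (g (x (Suc i)) - g (x i))\<bar> \<le> s i" by (rule s[OF i T1])
    moreover have "\<bar>RS f g L' y' \<mu>' - f (x i) * (g (x (Suc i)) - g (x i))\<bar> \<le> s i" by (rule s[OF i Q'])
    ultimately show ?thesis unfolding RST RSQ' by linarith
  qed
  have "RS f g l x \<nu> - RS f g L y \<mu> = (\<Sum>i<l. f (\<nu> i) * (g (x (Suc i)) - g (x i)) - (\<Sum>j\<in>{p i..<p (Suc i)}. \<phi> j))"
    unfolding RSQ by (simp add: RS_def sum_subtractf)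
  hence "\<bar>RS f g l x \<nu> - RS f g L y \<mu>\<bar> \<le> (\<Sum>i<l. \<bar>f (\<nu> i) * (g (x (Suc i)) - g (x i)) - (\<Sum>j\<in>{p i..<p (Suc i)}. \<phi> j)\<bar>)"
    by (simp add: sum_abs)
  also have "\<dots> \<le> (\<Sum>i<l. 2 * s i)" by (rule sum_mono) (use termb in simp)
  finally show ?thesis by (simp add: sum_distrib_left)
qed

lemma common_refinement:
  assumes P: "ispart a b l x \<nu>" and P': "ispart a b l' x' \<nu>'"
  shows "\<exists>L y. ispart a b L y y \<and> x ` {..l} \<subseteq> y ` {..L} \<and> x' ` {..l'} \<subseteq> y ` {..L}"
proof -
  define Y where "Y = x ` {..l} \<union> x' ` {..l'}"
  have Yfin: "finite Y" by (simp add: Y_def)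
  have Yab: "Y \<subseteq> {a..b}" using ispart_range[OF P] ispart_range[OF P'] by (auto simp: Y_def)
  have aY: "a \<in> Y" using P by (force simp: Y_def ispart_def)
  have bY: "b \<in> Y" using P by (force simp: Y_def ispart_def)
  define zs where "zs = sorted_list_of_set Y"
  have zset: "set zs = Y" using Yfin by (simp add: zs_def)
  have zsort: "sorted_wrt (<) zs" by (simp add: zs_def strict_sorted_list_of_set)
  have zlen: "0 < length zs" using zset aY by (metis length_pos_if_in_set)
  define L where "L = length zs - 1"
  define y where "y j = zs ! j" for j
  have yless: "y i < y j" if "i < j" "j \<le> L" for i j
    using sorted_wrt_nth_less[OF zsort that(1)] that zlen by (simp add: y_def L_def)
  have yin: "y j \<in> Y" if "j \<le> L" for j
  proof -
    have "j < length zs" using that zlen unfolding L_def by linarith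
    hence "zs ! j \<in> set zs" by (rule nth_mem)
    thus ?thesis using zset by (simp add: y_def)
  qed
  have rng: "y ` {..L} = Y"
  proof
    show "y ` {..L} \<subseteq> Y" using yin by auto
    show "Y \<subseteq> y ` {..L}"
    proof
      fix v assume "v \<in> Y"
      then obtain j where "j < length zs" "zs ! j = v" using zset by (metis in_set_conv_nth)
      thus "v \<in> y ` {..L}" by (auto simp: y_def L_def)
    qed
  qed
  have y0: "y 0 = a"
  proof -
    obtain j where j: "j \<le> L" "y j = a" using aY rng by (metis atMost_iff imageE)
    have "y 0 \<le> y j" using yless[of 0 j] j by (cases "j = 0") auto
    moreover have "a \<le> y 0" using yin[of 0] Yab by auto
    ultimately show ?thesis using j by simp
  qed
  have yL: "y L = b"
  proof -
    obtain j where j: "j \<le> L" "y j = b" using bY rng by (metis atMost_iff imageE)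
    have "y j \<le> y L" using yless[of j L] j by (cases "j = L") auto
    moreover have "y L \<le> b" using yin[of L] Yab by auto
    ultimately show ?thesis using j by simp
  qed
  have "ispart a b L y y" unfolding ispart_def using y0 yL yless by (auto simp: less_imp_le)
  moreover have "x ` {..l} \<subseteq> y ` {..L}" "x' ` {..l'} \<subseteq> y ` {..L}" using rng by (auto simp: Y_def)
  ultimately show ?thesis by blast
qed

lemma uniform_part:
  assumes ab: "a < b"
  defines "u \<equiv> \<lambda>n j. a + real j * (b - a) / real (Suc n)"
  shows "ispart a b (Suc n) (u n) (u n)" "\<forall>i<Suc n. u n (Suc i) - u n i = (b - a) / real (Suc n)"
proof -
  have st: "u n (Suc i) - u n i = (b - a) / real (Suc n)" for i
  proof -
    have "u n (Suc i) - u n i = (real (Suc i) * (b - a) - real i * (b - a)) / real (Suc n)"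
      by (simp add: u_def diff_divide_distrib)
    also have "real (Suc i) * (b - a) - real i * (b - a) = b - a" by (simp add: algebra_simps)
    finally show ?thesis .
  qed
  show "\<forall>i<Suc n. u n (Suc i) - u n i = (b - a) / real (Suc n)" using st by simp
  have pos: "0 < (b - a) / real (Suc n)" using ab by simp
  show "ispart a b (Suc n) (u n) (u n)" unfolding ispart_def
  proof (intro conjI allI impI)
    show "u n 0 = a" by (simp add: u_def)
    show "u n (Suc n) = b" by (simp add: u_def)
    fix i assume "i < Suc n"
    show "u n i < u n (Suc i)" using st[of i] pos by linarith
    show "u n i \<le> u n i" by simp
    show "u n i \<le> u n (Suc i)" using st[of i] pos by linarith
  qed
qed

lemma RS_integral_from_cauchy:
  fixes f g :: "real \<Rightarrow> real"
  assumes ab: "a < b"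
    and C: "\<And>\<epsilon>. 0 < \<epsilon> \<Longrightarrow> \<exists>\<delta>>0. \<forall>l x \<nu> l' x' \<nu>'. ispart a b l x \<nu> \<longrightarrow> (\<forall>i<l. x (Suc i) - x i < \<delta>) \<longrightarrow>
        ispart a b l' x' \<nu>' \<longrightarrow> (\<forall>i<l'. x' (Suc i) - x' i < \<delta>) \<longrightarrow> \<bar>RS f g l x \<nu> - RS f g l' x' \<nu>'\<bar> \<le> \<epsilon>"
    and K: "\<forall>l x \<nu>. ispart a b l x \<nu> \<longrightarrow> \<bar>RS f g l x \<nu> - c\<bar> \<le> K"
  shows "\<exists>I. RS_has_integral f g a b I \<and> \<bar>I - c\<bar> \<le> K"
proof -
  define u where "u = (\<lambda>n j. a + real j * (b - a) / real (Suc n))"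
  note U = uniform_part[OF ab, folded u_def]
  define R where "R n = RS f g (Suc n) (u n) (u n)" for n
  have Up: "ispart a b (Suc n) (u n) (u n)" for n
    using uniform_part(1)[OF ab, of n] unfolding u_def by simp
  have stG: "u n (Suc i) - u n i = (b - a) / real (Suc n)" for n i
  proof -
    have "u n (Suc i) - u n i = (real (Suc i) * (b - a) - real i * (b - a)) / real (Suc n)"
      by (simp add: u_def diff_divide_distrib)
    also have "real (Suc i) * (b - a) - real i * (b - a) = b - a" by (simp add: algebra_simps)
    finally show ?thesis .
  qed
  have small: "\<exists>N. \<forall>n\<ge>N. (b - a) / real (Suc n) < \<delta>" if d: "0 < \<delta>" for \<delta>
  proof -
    obtain N :: nat where N: "(b - a) / \<delta> < real N" using reals_Archimedean2 by blast
    have "b - a < real N * \<delta>" using N d by (simp add: pos_divide_less_eq)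
    have "(b - a) / real (Suc n) < \<delta>" if "N \<le> n" for n
    proof -
      have "b - a < real (Suc n) * \<delta>"
      proof -
        have "real N * \<delta> \<le> real (Suc n) * \<delta>" using that d by (intro mult_right_mono) auto
        thus ?thesis using \<open>b - a < real N * \<delta>\<close> by linarith
      qed
      thus ?thesis by (simp add: pos_divide_less_eq mult.commute)
    qed
    thus ?thesis by blast
  qed
  have "Cauchy R"
  proof (rule CauchyI)
    fix e :: real assume e: "0 < e"
    obtain \<delta> where \<delta>: "\<delta> > 0" "\<forall>l x \<nu> l' x' \<nu>'. ispart a b l x \<nu> \<longrightarrow> (\<forall>i<l. x (Suc i) - x i < \<delta>) \<longrightarrow>
        ispart a b l' x' \<nu>' \<longrightarrow> (\<forall>i<l'. x' (Suc i) - x' i < \<delta>) \<longrightarrow> \<bar>RS f g l x \<nu> - RS f g l' x' \<nu>'\<bar> \<le> e / 2"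
      using C[of "e / 2"] e by auto
    obtain N where N: "\<forall>n\<ge>N. (b - a) / real (Suc n) < \<delta>" using small[OF \<delta>(1)] by blast
    show "\<exists>M. \<forall>m\<ge>M. \<forall>n\<ge>M. norm (R m - R n) < e"
    proof (intro exI allI impI)
      fix m n assume mn: "N \<le> m" "N \<le> n"
      have m1: "\<forall>i<Suc m. u m (Suc i) - u m i < \<delta>" using N mn by (simp only: stG) simp
      have n1: "\<forall>i<Suc n. u n (Suc i) - u n i < \<delta>" using N mn by (simp only: stG) simp
      have "\<bar>R m - R n\<bar> \<le> e / 2" unfolding R_def
        using \<delta>(2) Up m1 n1 by blast
      thus "norm (R m - R n) < e" using e by simp
    qed
  qed
  then obtain I where I: "R \<longlonglongrightarrow> I" using Cauchy_convergent_iff convergent_def by blast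
  have "RS_has_integral f g a b I" unfolding RS_has_integral_def
  proof (intro allI impI)
    fix \<epsilon> :: real assume \<epsilon>: "0 < \<epsilon>"
    obtain \<delta> where \<delta>: "\<delta> > 0" "\<forall>l x \<nu> l' x' \<nu>'. ispart a b l x \<nu> \<longrightarrow> (\<forall>i<l. x (Suc i) - x i < \<delta>) \<longrightarrow>
        ispart a b l' x' \<nu>' \<longrightarrow> (\<forall>i<l'. x' (Suc i) - x' i < \<delta>) \<longrightarrow> \<bar>RS f g l x \<nu> - RS f g l' x' \<nu>'\<bar> \<le> \<epsilon> / 2"
      using C[of "\<epsilon> / 2"] \<epsilon> by auto
    obtain N where N: "\<forall>n\<ge>N. (b - a) / real (Suc n) < \<delta>" using small[OF \<delta>(1)] by blast
    have "\<forall>\<^sub>F n in sequentially. dist (R n) I < \<epsilon> / 2"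
      using I \<epsilon> tendsto_iff by (metis half_gt_zero)
    hence "\<forall>\<^sub>F n in sequentially. \<bar>R n - I\<bar> < \<epsilon> / 2" by (simp add: dist_real_def)
    moreover have "\<forall>\<^sub>F n in sequentially. N \<le> n" by (simp add: eventually_ge_at_top)
    ultimately have "\<forall>\<^sub>F n in sequentially. \<bar>R n - I\<bar> < \<epsilon> / 2 \<and> N \<le> n" by (rule eventually_conj)
    then obtain n where n: "\<bar>R n - I\<bar> < \<epsilon> / 2" "N \<le> n" by (auto simp: eventually_sequentially)
    show "\<exists>\<delta>>0. \<forall>l x \<nu>. x 0 = a \<and> x l = b \<and> (\<forall>i<l. x i < x (Suc i) \<and> x (Suc i) - x i < \<delta>) \<and>
        (\<forall>i<l. x i \<le> \<nu> i \<and> \<nu> i \<le> x (Suc i)) \<longrightarrow> \<bar>(\<Sum>i<l. f (\<nu> i) * (g (x (Suc i)) - g (x i))) - I\<bar> < \<epsilon>"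
    proof (rule exI[of _ \<delta>], intro conjI allI impI)
      show "0 < \<delta>" by (rule \<delta>(1))
      fix l x \<nu> assume h: "x 0 = a \<and> x l = b \<and> (\<forall>i<l. x i < x (Suc i) \<and> x (Suc i) - x i < \<delta>) \<and>
        (\<forall>i<l. x i \<le> \<nu> i \<and> \<nu> i \<le> x (Suc i))"
      have P: "ispart a b l x \<nu>" using h by (simp add: ispart_def)
      have n1: "\<forall>i<Suc n. u n (Suc i) - u n i < \<delta>" using N n(2) by (simp only: stG) simp
      have m1: "\<forall>i<l. x (Suc i) - x i < \<delta>" using h by simp
      have "\<bar>RS f g l x \<nu> - R n\<bar> \<le> \<epsilon> / 2" unfolding R_def
        using \<delta>(2) P Up m1 n1 by blast
      hence "\<bar>RS f g l x \<nu> - I\<bar> < \<epsilon>" using n(1) by linarith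
      thus "\<bar>(\<Sum>i<l. f (\<nu> i) * (g (x (Suc i)) - g (x i))) - I\<bar> < \<epsilon>" by (simp add: RS_def)
    qed
  qed
  moreover have "\<bar>I - c\<bar> \<le> K"
  proof (rule LIMSEQ_le_const2)
    show "(\<lambda>n. \<bar>R n - c\<bar>) \<longlonglongrightarrow> \<bar>I - c\<bar>" by (intro tendsto_intros I)
    show "\<exists>N. \<forall>n\<ge>N. \<bar>R n - c\<bar> \<le> K" using K Up by (auto simp: R_def)
  qed
  ultimately show ?thesis by blast
qed

definition tvr :: "(real \<Rightarrow> real) \<Rightarrow> real \<Rightarrow> real \<Rightarrow> real \<Rightarrow> real" where
  "tvr h c d \<delta> = real_of_ereal (truncated_variation h c d \<delta>)"

lemma tvr_nonneg: "0 \<le> tvr h c d \<delta>"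
  unfolding tvr_def by (rule real_of_ereal_pos[OF trunc_nonneg])

lemma trunc_fin_eq: "truncated_variation h c d \<delta> \<noteq> \<infinity> \<Longrightarrow> truncated_variation h c d \<delta> = ereal (tvr h c d \<delta>)"
  unfolding tvr_def using trunc_nonneg[of h c d \<delta>] by (metis abs_ereal_ge0 ereal_real')

lemma trunc_sub_fin:
  assumes "truncated_variation h a b \<delta> \<noteq> \<infinity>" "a \<le> c" "d \<le> b"
  shows "truncated_variation h c d \<delta> \<noteq> \<infinity>" "tvr h c d \<delta> \<le> tvr h a b \<delta>"
proof -
  have le: "truncated_variation h c d \<delta> \<le> truncated_variation h a b \<delta>" by (rule trunc_sub) (use assms in auto)
  thus "truncated_variation h c d \<delta> \<noteq> \<infinity>" using assms(1) by auto
  show "tvr h c d \<delta> \<le> tvr h a b \<delta>" unfolding tvr_def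
    by (rule real_of_ereal_positive_mono[OF trunc_nonneg le assms(1)])
qed

lemma tvr_partition:
  assumes P: "ispart a b l x \<nu>" and fin: "truncated_variation h a b \<delta> \<noteq> \<infinity>"
  shows "(\<Sum>i<l. tvr h (x i) (x (Suc i)) \<delta>) \<le> tvr h a b \<delta>"
proof -
  have m: "\<forall>i<l. x i \<le> x (Suc i)" using P by (simp add: ispart_def less_imp_le)
  have x0: "x 0 = a" "x l = b" using P by (auto simp: ispart_def)
  have fini: "truncated_variation h (x i) (x (Suc i)) \<delta> \<noteq> \<infinity>" if "i < l" for i
    using trunc_sub_fin(1)[OF fin] ispart_range[OF P, of i] ispart_range[OF P, of "Suc i"] that by simp
  have "(\<Sum>i<l. truncated_variation h (x i) (x (Suc i)) \<delta>) \<le> truncated_variation h a b \<delta>"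
    using trunc_partition[OF m, of h \<delta>] x0 by simp
  moreover have "(\<Sum>i<l. truncated_variation h (x i) (x (Suc i)) \<delta>) = ereal (\<Sum>i<l. tvr h (x i) (x (Suc i)) \<delta>)"
    using trunc_fin_eq fini by (simp add: sum_ereal[symmetric])
  moreover have "truncated_variation h a b \<delta> = ereal (tvr h a b \<delta>)" by (rule trunc_fin_eq[OF fin])
  ultimately show ?thesis by simp
qed

lemma goodbad:
  fixes f g :: "real \<Rightarrow> real"
  assumes reg: "regulated f a b" and ab: "a \<le> b"
    and nc: "\<forall>t\<in>{a..b}. continuous (at t within {a..b}) f \<or> continuous (at t within {a..b}) g"
    and e0: "0 < \<epsilon>0" and tau: "0 < \<tau>"
  shows "\<exists>\<delta>>0. \<forall>c d. a \<le> c \<longrightarrow> c \<le> d \<longrightarrow> d \<le> b \<longrightarrow> d - c < \<delta> \<longrightarrow>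
     (\<forall>s\<in>{c..d}. \<forall>t\<in>{c..d}. \<bar>f s - f t\<bar> \<le> \<epsilon>0) \<or> truncated_variation g c d \<tau> = 0"
proof -
  obtain D \<delta>D Bd where D: "finite D" "D \<subseteq> {a..b}" "0 < \<delta>D"
     "\<forall>p\<in>D. \<not> continuous (at p within {a..b}) f"
     "\<forall>s t. a \<le> s \<longrightarrow> s \<le> t \<longrightarrow> t \<le> b \<longrightarrow> t - s < \<delta>D \<longrightarrow> (\<forall>p\<in>D. p < s \<or> t < p) \<longrightarrow> \<bar>f s - f t\<bar> \<le> \<epsilon>0"
    using regulated_cover[OF reg ab e0] by (elim exE conjE) blast
  have t2: "0 < \<tau> / 2" using tau by simp
  have "\<forall>p\<in>D. \<exists>r>0. \<forall>y\<in>{a..b}. \<bar>y - p\<bar> < r \<longrightarrow> \<bar>g y - g p\<bar> < \<tau> / 2"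
  proof
    fix p assume p: "p \<in> D"
    hence "continuous (at p within {a..b}) g" using nc D(2,4) by blast
    thus "\<exists>r>0. \<forall>y\<in>{a..b}. \<bar>y - p\<bar> < r \<longrightarrow> \<bar>g y - g p\<bar> < \<tau> / 2" by (rule cont_nbhd[OF _ t2])
  qed
  then obtain \<rho> where \<rho>: "\<forall>p\<in>D. \<rho> p > 0 \<and> (\<forall>y\<in>{a..b}. \<bar>y - p\<bar> < \<rho> p \<longrightarrow> \<bar>g y - g p\<bar> < \<tau> / 2)"
    using bchoice[of D "\<lambda>p r. r > 0 \<and> (\<forall>y\<in>{a..b}. \<bar>y - p\<bar> < r \<longrightarrow> \<bar>g y - g p\<bar> < \<tau> / 2)"] by blast
  define \<delta> where "\<delta> = Min (insert \<delta>D (\<rho> ` D))"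
  have \<delta>0: "0 < \<delta>" unfolding \<delta>_def using D(1,3) \<rho> by simp
  have \<delta>D: "\<delta> \<le> \<delta>D" unfolding \<delta>_def using D(1) by simp
  have \<delta>\<rho>: "\<delta> \<le> \<rho> p" if "p \<in> D" for p unfolding \<delta>_def using D(1) that by simp
  show ?thesis
  proof (rule exI[of _ \<delta>], intro conjI allI impI)
    show "0 < \<delta>" by (rule \<delta>0)
    fix c d assume cd: "a \<le> c" "c \<le> d" "d \<le> b" "d - c < \<delta>"
    show "(\<forall>s\<in>{c..d}. \<forall>t\<in>{c..d}. \<bar>f s - f t\<bar> \<le> \<epsilon>0) \<or> truncated_variation g c d \<tau> = 0"
    proof (cases "\<exists>p\<in>D. c \<le> p \<and> p \<le> d")
      case True
      then obtain p where p: "p \<in> D" "c \<le> p" "p \<le> d" by blast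
      have "\<forall>t\<in>{c..d}. \<bar>g t - g p\<bar> \<le> \<tau> / 2"
      proof
        fix t assume t: "t \<in> {c..d}"
        have "\<bar>t - p\<bar> < \<rho> p" using t p cd \<delta>\<rho>[OF p(1)] by auto
        moreover have "t \<in> {a..b}" using t cd by auto
        ultimately show "\<bar>g t - g p\<bar> \<le> \<tau> / 2" using \<rho> p(1) by force
      qed
      thus ?thesis using trunc_const_zero by blast
    next
      case False
      have "\<forall>s\<in>{c..d}. \<forall>t\<in>{c..d}. \<bar>f s - f t\<bar> \<le> \<epsilon>0"
      proof (intro ballI)
        fix s t assume s: "s \<in> {c..d}" and t: "t \<in> {c..d}"
        have key: "\<bar>f u - f v\<bar> \<le> \<epsilon>0" if "u \<in> {c..d}" "v \<in> {c..d}" "u \<le> v" for u v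
        proof -
          have "\<forall>p\<in>D. p < u \<or> v < p" using False that by force
          moreover have "v - u < \<delta>D" using that cd \<delta>D by auto
          ultimately show ?thesis using D(5) that cd by auto
        qed
        show "\<bar>f s - f t\<bar> \<le> \<epsilon>0"
        proof (cases "s \<le> t")
          case True thus ?thesis using key s t by blast
        next
          case False thus ?thesis using key[of t s] s t by (simp add: abs_minus_commute)
        qed
      qed
      thus ?thesis by blast
    qed
  qed
qed

lemma ereal_mult_fin: "T \<noteq> \<infinity> \<Longrightarrow> 0 \<le> T \<Longrightarrow> ereal a * T = ereal (a * real_of_ereal T)"
  by (metis abs_ereal_ge0 ereal_real' times_ereal.simps(1))

lemma M_local:
  fixes f :: "real \<Rightarrow> real"
  assumes Mb: "\<forall>t\<in>{a..b}. \<bar>f t - f a\<bar> \<le> M" and cd: "a \<le> c" "c \<le> d" "d \<le> b"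
  shows "\<forall>t\<in>{c..d}. \<bar>f t - f c\<bar> \<le> 2 * M"
proof
  fix t assume t: "t \<in> {c..d}"
  have "t \<in> {a..b}" "c \<in> {a..b}" using t cd by auto
  hence "\<bar>f t - f a\<bar> \<le> M" "\<bar>f c - f a\<bar> \<le> M" using Mb by blast+
  thus "\<bar>f t - f c\<bar> \<le> 2 * M" by linarith
qed

lemma small23:
  fixes f g :: "real \<Rightarrow> real"
  assumes ab: "a < b" and reg_g: "regulated g a b"
    and Mb: "\<forall>t\<in>{a..b}. \<bar>f t - f a\<bar> \<le> M" "0 \<le> M"
    and e'0: "0 \<le> e'" and fin_f: "truncated_variation f a b e' \<noteq> \<infinity>"
    and fin_g: "0 < e' \<Longrightarrow> truncated_variation g a b 0 \<noteq> \<infinity>"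
    and tau: "0 < \<tau>" and eps0: "0 < \<epsilon>0"
    and GB: "\<forall>c d. a \<le> c \<longrightarrow> c \<le> d \<longrightarrow> d \<le> b \<longrightarrow> d - c < \<delta> \<longrightarrow>
     (\<forall>s\<in>{c..d}. \<forall>t\<in>{c..d}. \<bar>f s - f t\<bar> \<le> \<epsilon>0) \<or> truncated_variation g c d \<tau> = 0"
    and P: "ispart a b l x \<nu>" and mesh: "\<forall>i<l. x (Suc i) - x i < \<delta>"
  shows "\<exists>s. (\<forall>i L' y' \<mu>'. i < l \<longrightarrow> ispart (x i) (x (Suc i)) L' y' \<mu>' \<longrightarrow>
       \<bar>RS f g L' y' \<mu>' - f (x i) * (g (x (Suc i)) - g (x i))\<bar> \<le> s i) \<and>
     (\<Sum>i<l. s i) \<le> \<epsilon>0 * tvr g a b \<tau> + 2 * e' * tvr g a b 0 + \<tau> * tvr f a b e'"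
proof -
  have fin_gt: "truncated_variation g a b \<tau> \<noteq> \<infinity>" by (rule trunc_finite[OF reg_g _ tau]) (use ab in simp)
  define good where "good c d \<longleftrightarrow> (\<forall>s\<in>{c..d}. \<forall>t\<in>{c..d}. \<bar>f s - f t\<bar> \<le> \<epsilon>0)" for c d
  define s where "s i = (if good (x i) (x (Suc i)) then \<epsilon>0 * tvr g (x i) (x (Suc i)) \<tau> else 0)
     + 2 * e' * tvr g (x i) (x (Suc i)) 0 + \<tau> * tvr f (x i) (x (Suc i)) e'" for i
  have loc: "\<bar>RS f g L' y' \<mu>' - f (x i) * (g (x (Suc i)) - g (x i))\<bar> \<le> s i"
    if i: "i < l" and Q: "ispart (x i) (x (Suc i)) L' y' \<mu>'" for i L' y' \<mu>'
  proof -
    let ?c = "x i" and ?d = "x (Suc i)"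
    have cd: "a \<le> ?c" "?c \<le> ?d" "?d \<le> b" using ispart_range[OF P, of i] ispart_range[OF P, of "Suc i"] i P
      by (auto simp: ispart_def less_imp_le)
    define MI where "MI = (if good ?c ?d then \<epsilon>0 else 2 * M)"
    define \<eta>I where "\<eta>I k = (if k = 0 then e' else 0)" for k :: nat
    define \<theta>I where "\<theta>I k = (if k = 0 then \<tau> else 0)" for k :: nat
    define AI where "AI k = (if k = 0 then (if good ?c ?d then \<epsilon>0 * tvr g ?c ?d \<tau> else 0)
       else if k = 1 then 2 * e' * tvr g ?c ?d 0 else 0)" for k :: nat
    define BI where "BI k = (if k = 0 then \<tau> * tvr f ?c ?d e' else 0)" for k :: nat
    have MI: "\<forall>t\<in>{?c..?d}. \<bar>f t - f ?c\<bar> \<le> MI" "0 \<le> MI"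
    proof -
      show "0 \<le> MI" using Mb eps0 by (simp add: MI_def)
      show "\<forall>t\<in>{?c..?d}. \<bar>f t - f ?c\<bar> \<le> MI"
      proof (cases "good ?c ?d")
        case True thus ?thesis using cd by (simp add: MI_def good_def)
      next
        case False thus ?thesis using M_local[OF Mb(1) cd] by (simp add: MI_def)
      qed
    qed
    have ev\<eta>: "\<forall>\<^sub>F k in sequentially. \<eta>I k = 0" by (auto simp: eventually_sequentially \<eta>I_def intro!: exI[of _ 1])
    have ev\<theta>: "\<forall>\<^sub>F k in sequentially. \<theta>I k = 0" by (auto simp: eventually_sequentially \<theta>I_def intro!: exI[of _ 1])
    have eta: "\<forall>k. 0 \<le> \<eta>I k" "antimono \<eta>I" "\<eta>I \<longlonglongrightarrow> 0"
      using e'0 tendsto_eventually[OF ev\<eta>] by (auto simp: \<eta>I_def antimono_def monotone_on_def simp del: One_nat_def)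
      (use tendsto_eventually[OF ev\<eta>] in blast)
    have theta: "\<forall>k. 0 \<le> \<theta>I k" "antimono \<theta>I" "\<theta>I \<longlonglongrightarrow> 0"
      using tau tendsto_eventually[OF ev\<theta>] by (auto simp: \<theta>I_def antimono_def monotone_on_def)
      (use tendsto_eventually[OF ev\<theta>] in blast)
    have Asum: "summable AI" by (rule summable_finite[of "{0, 1}"]) (auto simp: AI_def)
    have Bsum: "summable BI" by (rule summable_finite[of "{0}"]) (auto simp: BI_def)
    have finloc_gt: "truncated_variation g ?c ?d \<tau> \<noteq> \<infinity>" using trunc_sub_fin(1)[OF fin_gt cd(1,3)] .
    have finloc_f: "truncated_variation f ?c ?d e' \<noteq> \<infinity>" using trunc_sub_fin(1)[OF fin_f cd(1,3)] .
    have Acond: "\<forall>k. ereal (2 ^ k * (if k = 0 then MI else \<eta>I (k - 1))) * truncated_variation g ?c ?d (\<theta>I k) \<le> ereal (AI k)"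
    proof
      fix k :: nat
      consider "k = 0" | "k = 1" | "k \<ge> 2" by linarith
      then show "ereal (2 ^ k * (if k = 0 then MI else \<eta>I (k - 1))) * truncated_variation g ?c ?d (\<theta>I k) \<le> ereal (AI k)"
      proof cases
        case 1
        show ?thesis
        proof (cases "good ?c ?d")
          case True
          thus ?thesis using 1 ereal_mult_fin[OF finloc_gt trunc_nonneg, of \<epsilon>0]
            by (simp add: MI_def AI_def \<theta>I_def tvr_def)
        next
          case False
          hence "truncated_variation g ?c ?d \<tau> = 0" using GB cd mesh i unfolding good_def by blast
          thus ?thesis using 1 False by (simp add: AI_def \<theta>I_def zero_ereal_def[symmetric])
        qed
      next
        case 2
        show ?thesis
        proof (cases "e' = 0")
          case True thus ?thesis using 2 by (simp add: AI_def \<eta>I_def zero_ereal_def[symmetric])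
        next
          case False
          hence "0 < e'" using e'0 by simp
          hence fg: "truncated_variation g a b 0 \<noteq> \<infinity>" by (rule fin_g)
          have "truncated_variation g ?c ?d 0 \<noteq> \<infinity>" using trunc_sub_fin(1)[OF fg cd(1,3)] .
          thus ?thesis using 2 ereal_mult_fin[OF _ trunc_nonneg, of g ?c ?d 0 "2 * e'"]
            by (simp add: AI_def \<eta>I_def \<theta>I_def tvr_def)
        qed
      next
        case 3 thus ?thesis by (simp add: AI_def \<eta>I_def zero_ereal_def[symmetric])
      qed
    qed
    have Bcond: "\<forall>k. ereal (2 ^ k * \<theta>I k) * truncated_variation f ?c ?d (\<eta>I k) \<le> ereal (BI k)"
    proof
      fix k :: nat
      show "ereal (2 ^ k * \<theta>I k) * truncated_variation f ?c ?d (\<eta>I k) \<le> ereal (BI k)"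
      proof (cases "k = 0")
        case True thus ?thesis using ereal_mult_fin[OF finloc_f trunc_nonneg, of \<tau>]
          by (simp add: BI_def \<theta>I_def \<eta>I_def tvr_def)
      next
        case False thus ?thesis by (simp add: BI_def \<theta>I_def zero_ereal_def[symmetric])
      qed
    qed
    have "\<bar>RS f g L' y' \<mu>' - f ?c * (g ?d - g ?c)\<bar> \<le> suminf AI + suminf BI"
      by (rule core[OF Q MI eta theta Asum Acond Bsum Bcond])
    also have "suminf AI = AI 0 + AI 1" by (subst suminf_finite[of "{0, 1}"]) (auto simp: AI_def)
    also have "suminf BI = BI 0" by (subst suminf_finite[of "{0}"]) (auto simp: BI_def)
    also have "AI 0 + AI 1 + BI 0 = s i" by (simp add: AI_def BI_def s_def)
    finally show ?thesis .
  qed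
  have "(\<Sum>i<l. s i) \<le> \<epsilon>0 * tvr g a b \<tau> + 2 * e' * tvr g a b 0 + \<tau> * tvr f a b e'"
  proof -
    have s1: "(\<Sum>i<l. (if good (x i) (x (Suc i)) then \<epsilon>0 * tvr g (x i) (x (Suc i)) \<tau> else 0))
       \<le> (\<Sum>i<l. \<epsilon>0 * tvr g (x i) (x (Suc i)) \<tau>)"
      by (rule sum_mono) (use eps0 tvr_nonneg in \<open>auto intro: mult_nonneg_nonneg\<close>)
    also have "\<dots> = \<epsilon>0 * (\<Sum>i<l. tvr g (x i) (x (Suc i)) \<tau>)" by (simp add: sum_distrib_left)
    also have "\<dots> \<le> \<epsilon>0 * tvr g a b \<tau>" using tvr_partition[OF P fin_gt] eps0 by (simp add: mult_left_mono)
    finally have s1: "(\<Sum>i<l. (if good (x i) (x (Suc i)) then \<epsilon>0 * tvr g (x i) (x (Suc i)) \<tau> else 0)) \<le> \<epsilon>0 * tvr g a b \<tau>" .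
    have s2: "(\<Sum>i<l. 2 * e' * tvr g (x i) (x (Suc i)) 0) \<le> 2 * e' * tvr g a b 0"
    proof (cases "e' = 0")
      case True thus ?thesis by simp
    next
      case False
      hence "0 < e'" using e'0 by simp
      hence fg: "truncated_variation g a b 0 \<noteq> \<infinity>" by (rule fin_g)
      have "(\<Sum>i<l. 2 * e' * tvr g (x i) (x (Suc i)) 0) = 2 * e' * (\<Sum>i<l. tvr g (x i) (x (Suc i)) 0)"
        by (simp add: sum_distrib_left)
      also have "\<dots> \<le> 2 * e' * tvr g a b 0" using tvr_partition[OF P fg] e'0 by (simp add: mult_left_mono)
      finally show ?thesis .
    qed
    have s3: "(\<Sum>i<l. \<tau> * tvr f (x i) (x (Suc i)) e') \<le> \<tau> * tvr f a b e'"
    proof -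
      have "(\<Sum>i<l. \<tau> * tvr f (x i) (x (Suc i)) e') = \<tau> * (\<Sum>i<l. tvr f (x i) (x (Suc i)) e')"
        by (simp add: sum_distrib_left)
      also have "\<dots> \<le> \<tau> * tvr f a b e'" using tvr_partition[OF P fin_f] tau by (simp add: mult_left_mono)
      finally show ?thesis .
    qed
    have "(\<Sum>i<l. s i) = (\<Sum>i<l. (if good (x i) (x (Suc i)) then \<epsilon>0 * tvr g (x i) (x (Suc i)) \<tau> else 0)) +
       (\<Sum>i<l. 2 * e' * tvr g (x i) (x (Suc i)) 0) + (\<Sum>i<l. \<tau> * tvr f (x i) (x (Suc i)) e')"
      by (simp add: s_def sum.distrib)
    thus ?thesis using s1 s2 s3 by linarith
  qed
  thus ?thesis using loc by blast
qed

lemma small1: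
  fixes f g :: "real \<Rightarrow> real" and \<eta> \<theta> A B :: "nat \<Rightarrow> real"
  assumes ab: "a < b" and reg_g: "regulated g a b"
    and Mb: "\<forall>t\<in>{a..b}. \<bar>f t - f a\<bar> \<le> M" "0 \<le> M"
    and eta: "\<forall>k. 0 \<le> \<eta> k" "antimono \<eta>" "\<eta> \<longlonglongrightarrow> 0"
    and theta: "\<forall>k. 0 \<le> \<theta> k" "antimono \<theta>" "\<theta> \<longlonglongrightarrow> 0"
    and tpos: "\<forall>k. 0 < \<theta> k"
    and A2: "\<forall>k. 2 ^ k * (if k = 0 then M else \<eta> (k - 1)) * tvr g a b (\<theta> k) \<le> A k" and Asum: "summable A"
    and Bfin: "\<forall>k. truncated_variation f a b (\<eta> k) \<noteq> \<infinity>"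
    and B2: "\<forall>k. 2 ^ k * \<theta> k * tvr f a b (\<eta> k) \<le> B k" and Bsum: "summable B"
    and eps0: "0 < \<epsilon>0"
    and GB: "\<forall>c d. a \<le> c \<longrightarrow> c \<le> d \<longrightarrow> d \<le> b \<longrightarrow> d - c < \<delta> \<longrightarrow>
     (\<forall>s\<in>{c..d}. \<forall>t\<in>{c..d}. \<bar>f s - f t\<bar> \<le> \<epsilon>0) \<or> truncated_variation g c d (\<theta> N) = 0"
    and P: "ispart a b l x \<nu>" and mesh: "\<forall>i<l. x (Suc i) - x i < \<delta>"
  shows "\<exists>s. (\<forall>i L' y' \<mu>'. i < l \<longrightarrow> ispart (x i) (x (Suc i)) L' y' \<mu>' \<longrightarrow>
       \<bar>RS f g L' y' \<mu>' - f (x i) * (g (x (Suc i)) - g (x i))\<bar> \<le> s i) \<and>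
     (\<Sum>i<l. s i) \<le> \<epsilon>0 * tvr g a b (\<theta> N) + (\<Sum>k. A (k + Suc N)) + (\<Sum>k. B (k + N))"
proof -
  have fing: "truncated_variation g a b (\<theta> k) \<noteq> \<infinity>" for k
    by (rule trunc_finite[OF reg_g]) (use ab tpos in auto)
  have cdi: "a \<le> x i" "x i \<le> x (Suc i)" "x (Suc i) \<le> b" if "i < l" for i
    using ispart_range[OF P, of i] ispart_range[OF P, of "Suc i"] that P by (auto simp: ispart_def less_imp_le)
  define good where "good i \<longleftrightarrow> (\<forall>s\<in>{x i..x (Suc i)}. \<forall>t\<in>{x i..x (Suc i)}. \<bar>f s - f t\<bar> \<le> \<epsilon>0)" for i
  define AI where "AI i k = (if k = 0 then (if good i then \<epsilon>0 * tvr g (x i) (x (Suc i)) (\<theta> N) else 0)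
       else 2 ^ k * \<eta> (k - 1 + N) * tvr g (x i) (x (Suc i)) (\<theta> (k + N)))" for i k
  define BI where "BI i k = 2 ^ k * \<theta> (k + N) * tvr f (x i) (x (Suc i)) (\<eta> (k + N))" for i k
  have A0: "0 \<le> A k" for k using A2 tvr_nonneg[of g a b "\<theta> k"] eta(1) Mb(2)
    by (smt (verit, best) mult_nonneg_nonneg zero_le_power)
  have B0: "0 \<le> B k" for k using B2 tvr_nonneg[of f a b "\<eta> k"] theta(1)
    by (smt (verit, best) mult_nonneg_nonneg zero_le_power)
  have AIle: "AI i (Suc k) \<le> A (Suc k + N)" if i: "i < l" for i k
  proof -
    have "tvr g (x i) (x (Suc i)) (\<theta> (Suc k + N)) \<le> tvr g a b (\<theta> (Suc k + N))"
      by (rule trunc_sub_fin(2)[OF fing cdi(1)[OF i] cdi(3)[OF i]])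
    hence "2 ^ Suc k * \<eta> (k + N) * tvr g (x i) (x (Suc i)) (\<theta> (Suc k + N)) \<le> 2 ^ Suc k * \<eta> (k + N) * tvr g a b (\<theta> (Suc k + N))"
      using eta(1) by (simp add: mult_left_mono)
    also have "\<dots> \<le> 2 ^ (Suc k + N) * \<eta> (k + N) * tvr g a b (\<theta> (Suc k + N))"
    proof -
      have "(2::real) ^ Suc k \<le> 2 ^ (Suc k + N)" by (rule power_increasing) auto
      thus ?thesis using eta(1) tvr_nonneg[of g a b] by (intro mult_right_mono) auto
    qed
    also have "\<dots> \<le> A (Suc k + N)" using A2[rule_format, of "Suc k + N"] by simp
    finally show ?thesis by (simp add: AI_def)
  qed
  have BIle: "BI i k \<le> B (k + N)" if i: "i < l" for i k
  proof -
    have "tvr f (x i) (x (Suc i)) (\<eta> (k + N)) \<le> tvr f a b (\<eta> (k + N))"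
      by (rule trunc_sub_fin(2)[OF Bfin[rule_format] cdi(1)[OF i] cdi(3)[OF i]])
    hence "2 ^ k * \<theta> (k + N) * tvr f (x i) (x (Suc i)) (\<eta> (k + N)) \<le> 2 ^ k * \<theta> (k + N) * tvr f a b (\<eta> (k + N))"
      using theta(1) by (simp add: mult_left_mono)
    also have "\<dots> \<le> 2 ^ (k + N) * \<theta> (k + N) * tvr f a b (\<eta> (k + N))"
    proof -
      have "(2::real) ^ k \<le> 2 ^ (k + N)" by (rule power_increasing) auto
      thus ?thesis using theta(1) tvr_nonneg[of f a b] by (intro mult_right_mono) auto
    qed
    also have "\<dots> \<le> B (k + N)" using B2 by simp
    finally show ?thesis by (simp add: BI_def)
  qed
  have AI0: "0 \<le> AI i k" for i k using eps0 eta(1) tvr_nonneg by (auto simp: AI_def)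
  have BI0: "0 \<le> BI i k" for i k using theta(1) tvr_nonneg by (auto simp: BI_def)
  have AIsum: "summable (AI i)" if i: "i < l" for i
  proof -
    have "summable (\<lambda>k. AI i (Suc k))"
      by (rule summable_comparison_test'[OF summable_ignore_initial_segment[OF Asum, of "Suc N"], where N=0])
        (use AIle[OF i] AI0 in \<open>auto simp: add.commute add.left_commute\<close>)
    thus ?thesis by (simp add: summable_Suc_iff)
  qed
  have BIsum: "summable (BI i)" if i: "i < l" for i
    by (rule summable_comparison_test'[OF summable_ignore_initial_segment[OF Bsum, of N], where N=0])
      (use BIle[OF i] BI0 in auto)
  define s where "s i = suminf (AI i) + suminf (BI i)" for i
  have loc: "\<bar>RS f g L' y' \<mu>' - f (x i) * (g (x (Suc i)) - g (x i))\<bar> \<le> s i"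
    if i: "i < l" and Q: "ispart (x i) (x (Suc i)) L' y' \<mu>'" for i L' y' \<mu>'
  proof -
    let ?c = "x i" and ?d = "x (Suc i)"
    note cd = cdi[OF i]
    define MI where "MI = (if good i then \<epsilon>0 else 2 * M)"
    define \<eta>I where "\<eta>I k = \<eta> (k + N)" for k
    define \<theta>I where "\<theta>I k = \<theta> (k + N)" for k
    have MI: "\<forall>t\<in>{?c..?d}. \<bar>f t - f ?c\<bar> \<le> MI" "0 \<le> MI"
    proof -
      show "0 \<le> MI" using Mb eps0 by (simp add: MI_def)
      show "\<forall>t\<in>{?c..?d}. \<bar>f t - f ?c\<bar> \<le> MI"
      proof (cases "good i")
        case True thus ?thesis using cd by (simp add: MI_def good_def)
      next
        case False thus ?thesis using M_local[OF Mb(1) cd] by (simp add: MI_def)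
      qed
    qed
    have etaI: "\<forall>k. 0 \<le> \<eta>I k" "antimono \<eta>I" "\<eta>I \<longlonglongrightarrow> 0"
    proof -
      show "\<forall>k. 0 \<le> \<eta>I k" using eta(1) by (simp add: \<eta>I_def)
      show "antimono \<eta>I" using eta(2) unfolding \<eta>I_def antimono_def monotone_on_def by simp
      show "\<eta>I \<longlonglongrightarrow> 0" unfolding \<eta>I_def by (rule LIMSEQ_ignore_initial_segment[OF eta(3)])
    qed
    have thetaI: "\<forall>k. 0 \<le> \<theta>I k" "antimono \<theta>I" "\<theta>I \<longlonglongrightarrow> 0"
    proof -
      show "\<forall>k. 0 \<le> \<theta>I k" using theta(1) by (simp add: \<theta>I_def)
      show "antimono \<theta>I" using theta(2) unfolding \<theta>I_def antimono_def monotone_on_def by simp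
      show "\<theta>I \<longlonglongrightarrow> 0" unfolding \<theta>I_def by (rule LIMSEQ_ignore_initial_segment[OF theta(3)])
    qed
    have finloc: "truncated_variation g ?c ?d (\<theta> k) \<noteq> \<infinity>" for k using trunc_sub_fin(1)[OF fing cd(1,3)] .
    have finlocf: "truncated_variation f ?c ?d (\<eta> k) \<noteq> \<infinity>" for k using trunc_sub_fin(1)[OF Bfin[rule_format] cd(1,3)] .
    have Acond: "\<forall>k. ereal (2 ^ k * (if k = 0 then MI else \<eta>I (k - 1))) * truncated_variation g ?c ?d (\<theta>I k) \<le> ereal (AI i k)"
    proof
      fix k :: nat
      show "ereal (2 ^ k * (if k = 0 then MI else \<eta>I (k - 1))) * truncated_variation g ?c ?d (\<theta>I k) \<le> ereal (AI i k)"
      proof (cases "k = 0")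
        case True
        show ?thesis
        proof (cases "good i")
          case g: True
          thus ?thesis using True ereal_mult_fin[OF finloc trunc_nonneg, of \<epsilon>0 N]
            by (simp add: MI_def AI_def \<theta>I_def tvr_def)
        next
          case g: False
          hence "truncated_variation g ?c ?d (\<theta> N) = 0" using GB cd mesh i unfolding good_def by blast
          thus ?thesis using True g by (simp add: AI_def \<theta>I_def zero_ereal_def[symmetric])
        qed
      next
        case False
        thus ?thesis using ereal_mult_fin[OF finloc trunc_nonneg, of "2 ^ k * \<eta> (k - 1 + N)" "k + N"]
          by (simp add: AI_def \<eta>I_def \<theta>I_def tvr_def)
      qed
    qed
    have Bcond: "\<forall>k. ereal (2 ^ k * \<theta>I k) * truncated_variation f ?c ?d (\<eta>I k) \<le> ereal (BI i k)"
      using ereal_mult_fin[OF finlocf trunc_nonneg] by (simp add: BI_def \<theta>I_def \<eta>I_def tvr_def)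
    show ?thesis unfolding s_def by (rule core[OF Q MI etaI thetaI AIsum[OF i] Acond BIsum[OF i] Bcond])
  qed
  have sumbound: "(\<Sum>i<l. s i) \<le> \<epsilon>0 * tvr g a b (\<theta> N) + (\<Sum>k. A (k + Suc N)) + (\<Sum>k. B (k + N))"
  proof -
    have split: "suminf (AI i) = AI i 0 + (\<Sum>k. AI i (Suc k))" if i: "i < l" for i
      using suminf_split_head[OF AIsum[OF i]] by simp
    have "(\<Sum>i<l. s i) = (\<Sum>i<l. AI i 0) + (\<Sum>i<l. \<Sum>k. AI i (Suc k)) + (\<Sum>i<l. suminf (BI i))"
      unfolding s_def using split by (simp add: sum.distrib)
    also have "(\<Sum>i<l. AI i 0) \<le> \<epsilon>0 * tvr g a b (\<theta> N)"
    proof -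
      have "(\<Sum>i<l. AI i 0) \<le> (\<Sum>i<l. \<epsilon>0 * tvr g (x i) (x (Suc i)) (\<theta> N))"
        by (rule sum_mono) (use eps0 tvr_nonneg in \<open>auto simp: AI_def intro: mult_nonneg_nonneg\<close>)
      also have "\<dots> = \<epsilon>0 * (\<Sum>i<l. tvr g (x i) (x (Suc i)) (\<theta> N))" by (simp add: sum_distrib_left)
      also have "\<dots> \<le> \<epsilon>0 * tvr g a b (\<theta> N)" using tvr_partition[OF P fing] eps0 by (simp add: mult_left_mono)
      finally show ?thesis .
    qed
    also have "(\<Sum>i<l. \<Sum>k. AI i (Suc k)) \<le> (\<Sum>k. A (k + Suc N))"
    proof -
      have "(\<Sum>i<l. \<Sum>k. AI i (Suc k)) = (\<Sum>k. \<Sum>i<l. AI i (Suc k))"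
        by (rule suminf_sum[symmetric]) (use AIsum in \<open>auto simp: summable_Suc_iff\<close>)
      also have "\<dots> \<le> (\<Sum>k. A (k + Suc N))"
      proof (rule suminf_le)
        fix k
        have "(\<Sum>i<l. AI i (Suc k)) = 2 ^ Suc k * \<eta> (k + N) * (\<Sum>i<l. tvr g (x i) (x (Suc i)) (\<theta> (Suc k + N)))"
          by (simp add: AI_def sum_distrib_left)
        also have "\<dots> \<le> 2 ^ Suc k * \<eta> (k + N) * tvr g a b (\<theta> (Suc k + N))"
          using tvr_partition[OF P fing] eta(1) by (simp add: mult_left_mono)
        also have "\<dots> \<le> 2 ^ (Suc k + N) * \<eta> (k + N) * tvr g a b (\<theta> (Suc k + N))"
        proof -
          have "(2::real) ^ Suc k \<le> 2 ^ (Suc k + N)" by (rule power_increasing) auto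
          thus ?thesis using eta(1) tvr_nonneg[of g a b] by (intro mult_right_mono) auto
        qed
        also have "\<dots> \<le> A (Suc k + N)" using A2[rule_format, of "Suc k + N"] by simp
        finally show "(\<Sum>i<l. AI i (Suc k)) \<le> A (k + Suc N)" by simp
      next
        show "summable (\<lambda>k. \<Sum>i<l. AI i (Suc k))"
          by (rule summable_sum) (use AIsum in \<open>auto simp: summable_Suc_iff\<close>)
        show "summable (\<lambda>k. A (k + Suc N))" by (rule summable_ignore_initial_segment[OF Asum])
      qed
      finally show ?thesis .
    qed
    also have "(\<Sum>i<l. suminf (BI i)) \<le> (\<Sum>k. B (k + N))"
    proof -
      have "(\<Sum>i<l. suminf (BI i)) = (\<Sum>k. \<Sum>i<l. BI i k)"
        by (rule suminf_sum[symmetric]) (use BIsum in auto)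
      also have "\<dots> \<le> (\<Sum>k. B (k + N))"
      proof (rule suminf_le)
        fix k
        have "(\<Sum>i<l. BI i k) = 2 ^ k * \<theta> (k + N) * (\<Sum>i<l. tvr f (x i) (x (Suc i)) (\<eta> (k + N)))"
          by (simp add: BI_def sum_distrib_left)
        also have "\<dots> \<le> 2 ^ k * \<theta> (k + N) * tvr f a b (\<eta> (k + N))"
          using tvr_partition[OF P Bfin[rule_format]] theta(1) by (simp add: mult_left_mono)
        also have "\<dots> \<le> 2 ^ (k + N) * \<theta> (k + N) * tvr f a b (\<eta> (k + N))"
        proof -
          have "(2::real) ^ k \<le> 2 ^ (k + N)" by (rule power_increasing) auto
          thus ?thesis using theta(1) tvr_nonneg[of f a b] by (intro mult_right_mono) auto
        qed
        also have "\<dots> \<le> B (k + N)" using B2 by simp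
        finally show "(\<Sum>i<l. BI i k) \<le> B (k + N)" .
      next
        show "summable (\<lambda>k. \<Sum>i<l. BI i k)" by (rule summable_sum) (use BIsum in auto)
        show "summable (\<lambda>k. B (k + N))" by (rule summable_ignore_initial_segment[OF Bsum])
      qed
      finally show ?thesis .
    qed
    finally show ?thesis by simp
  qed
  show ?thesis using loc sumbound by blast
qed

lemma cauchy_from_small:
  fixes f g :: "real \<Rightarrow> real"
  assumes small: "\<And>\<epsilon>. 0 < \<epsilon> \<Longrightarrow> \<exists>\<delta>>0. \<forall>l x \<nu>. ispart a b l x \<nu> \<longrightarrow> (\<forall>i<l. x (Suc i) - x i < \<delta>) \<longrightarrow>
     (\<exists>s. (\<forall>i L' y' \<mu>'. i < l \<longrightarrow> ispart (x i) (x (Suc i)) L' y' \<mu>' \<longrightarrow>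
       \<bar>RS f g L' y' \<mu>' - f (x i) * (g (x (Suc i)) - g (x i))\<bar> \<le> s i) \<and> (\<Sum>i<l. s i) \<le> \<epsilon>)"
    and e: "0 < \<epsilon>"
  shows "\<exists>\<delta>>0. \<forall>l x \<nu> l' x' \<nu>'. ispart a b l x \<nu> \<longrightarrow> (\<forall>i<l. x (Suc i) - x i < \<delta>) \<longrightarrow>
        ispart a b l' x' \<nu>' \<longrightarrow> (\<forall>i<l'. x' (Suc i) - x' i < \<delta>) \<longrightarrow> \<bar>RS f g l x \<nu> - RS f g l' x' \<nu>'\<bar> \<le> \<epsilon>"
proof -
  obtain \<delta> where \<delta>: "\<delta> > 0" "\<forall>l x \<nu>. ispart a b l x \<nu> \<longrightarrow> (\<forall>i<l. x (Suc i) - x i < \<delta>) \<longrightarrow>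
     (\<exists>s. (\<forall>i L' y' \<mu>'. i < l \<longrightarrow> ispart (x i) (x (Suc i)) L' y' \<mu>' \<longrightarrow>
       \<bar>RS f g L' y' \<mu>' - f (x i) * (g (x (Suc i)) - g (x i))\<bar> \<le> s i) \<and> (\<Sum>i<l. s i) \<le> \<epsilon> / 4)"
    using small[of "\<epsilon> / 4"] e by auto
  show ?thesis
  proof (rule exI[of _ \<delta>], intro conjI allI impI)
    show "0 < \<delta>" by (rule \<delta>(1))
    fix l x \<nu> l' x' \<nu>'
    assume P: "ispart a b l x \<nu>" and m: "\<forall>i<l. x (Suc i) - x i < \<delta>"
      and P': "ispart a b l' x' \<nu>'" and m': "\<forall>i<l'. x' (Suc i) - x' i < \<delta>"
    obtain s where s: "\<forall>i L' y' \<mu>'. i < l \<longrightarrow> ispart (x i) (x (Suc i)) L' y' \<mu>' \<longrightarrow>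
       \<bar>RS f g L' y' \<mu>' - f (x i) * (g (x (Suc i)) - g (x i))\<bar> \<le> s i" "(\<Sum>i<l. s i) \<le> \<epsilon> / 4"
      using \<delta>(2) P m by blast
    obtain s' where s': "\<forall>i L' y' \<mu>'. i < l' \<longrightarrow> ispart (x' i) (x' (Suc i)) L' y' \<mu>' \<longrightarrow>
       \<bar>RS f g L' y' \<mu>' - f (x' i) * (g (x' (Suc i)) - g (x' i))\<bar> \<le> s' i" "(\<Sum>i<l'. s' i) \<le> \<epsilon> / 4"
      using \<delta>(2) P' m' by blast
    obtain L y where Q: "ispart a b L y y" "x ` {..l} \<subseteq> y ` {..L}" "x' ` {..l'} \<subseteq> y ` {..L}"
      using common_refinement[OF P P'] by blast
    have r1: "\<bar>RS f g l x \<nu> - RS f g L y y\<bar> \<le> 2 * (\<Sum>i<l. s i)"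
      by (rule refine[OF P Q(1) Q(2)]) (use s(1) in blast)
    have r2: "\<bar>RS f g l' x' \<nu>' - RS f g L y y\<bar> \<le> 2 * (\<Sum>i<l'. s' i)"
      by (rule refine[OF P' Q(1) Q(3)]) (use s'(1) in blast)
    show "\<bar>RS f g l x \<nu> - RS f g l' x' \<nu>'\<bar> \<le> \<epsilon>" using r1 r2 s(2) s'(2) by linarith
  qed
qed

lemma ereal_series_real:
  fixes a :: "nat \<Rightarrow> ereal"
  assumes "\<forall>k. 0 \<le> a k" "suminf a \<noteq> \<infinity>"
  shows "\<forall>k. a k = ereal (real_of_ereal (a k))" "summable (\<lambda>k. real_of_ereal (a k))"
    "suminf a = ereal (\<Sum>k. real_of_ereal (a k))"
proof -
  have fin: "a k \<noteq> \<infinity>" for k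
  proof -
    have "sum a {..<Suc k} \<le> suminf a" by (rule suminf_upper) (use assms in auto)
    moreover have "a k \<le> sum a {..<Suc k}"
    proof -
      have "sum a {..<Suc k} = sum a {..<k} + a k" by simp
      moreover have "0 \<le> sum a {..<k}" using assms(1) by (simp add: sum_nonneg)
      ultimately show ?thesis by (metis add_increasing order_refl)
    qed
    ultimately show ?thesis using assms(2) by auto
  qed
  show ak: "\<forall>k. a k = ereal (real_of_ereal (a k))" using fin assms(1) by (metis abs_ereal_ge0 ereal_real')
  have eq: "(\<Sum>k. ereal (real_of_ereal (a k))) = suminf a" using ak by (metis (no_types) ext)
  show sm: "summable (\<lambda>k. real_of_ereal (a k))"
    by (rule summable_ereal) (use assms eq in \<open>auto intro: real_of_ereal_pos\<close>)
  show "suminf a = ereal (\<Sum>k. real_of_ereal (a k))" using eq suminf_ereal'[OF sm] by simp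
qed

lemma tail_small:
  fixes A :: "nat \<Rightarrow> real"
  assumes "summable A" "0 < e"
  shows "\<exists>N0. \<forall>n\<ge>N0. (\<Sum>k. A (k + n)) < e"
proof -
  have "(\<lambda>n. \<Sum>i<n. A i) \<longlonglongrightarrow> suminf A" by (rule summable_LIMSEQ[OF assms(1)])
  hence "(\<lambda>n. suminf A - (\<Sum>i<n. A i)) \<longlonglongrightarrow> suminf A - suminf A" by (intro tendsto_intros)
  hence "(\<lambda>n. suminf A - (\<Sum>i<n. A i)) \<longlonglongrightarrow> 0" by simp
  hence "\<forall>\<^sub>F n in sequentially. suminf A - (\<Sum>i<n. A i) < e" using assms(2) by (simp add: order_tendstoD(2))
  then obtain N0 where "\<forall>n\<ge>N0. suminf A - (\<Sum>i<n. A i) < e" by (auto simp: eventually_sequentially)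
  thus ?thesis using suminf_minus_initial_segment[OF assms(1)] by auto
qed

lemma frac_cancel: "0 \<le> (T::real) \<Longrightarrow> 0 < k \<Longrightarrow> e / (k * (T + 1)) * (T + 1) = e / k"
proof -
  assume "0 \<le> T" "0 < k"
  hence nz: "T + 1 \<noteq> 0" by simp_all
  have "e / (k * (T + 1)) * (T + 1) = (e * (T + 1)) / (k * (T + 1))" by simp
  also have "\<dots> = e / k" using nz by (rule mult_divide_mult_cancel_right)
  finally show ?thesis .
qed

theorem theorem1:
  fixes f g :: "real \<Rightarrow> real" and a b :: real and \<eta> \<theta> :: "nat \<Rightarrow> real"
  assumes ab: "a < b"
    and reg_f: "regulated f a b" and reg_g: "regulated g a b"
    and no_common: "\<forall>t\<in>{a..b}. continuous (at t within {a..b}) f \<or> continuous (at t within {a..b}) g"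
    and eta_nonneg: "\<forall>k. \<eta> k \<ge> 0" and eta_mono: "antimono \<eta>" and eta_lim: "\<eta> \<longlonglongrightarrow> 0"
    and theta_nonneg: "\<forall>k. \<theta> k \<ge> 0" and theta_mono: "antimono \<theta>" and theta_lim: "\<theta> \<longlonglongrightarrow> 0"
    and S_fin: "(\<Sum>k. ereal (2 ^ k * (if k = 0 then (SUP t\<in>{a..b}. \<bar>f t - f a\<bar>) else \<eta> (k - 1)))
                        * truncated_variation g a b (\<theta> k))
              + (\<Sum>k. ereal (2 ^ k * \<theta> k) * truncated_variation f a b (\<eta> k)) < \<infinity>"
  shows "\<exists>I. RS_has_integral f g a b I \<and>
           ereal \<bar>I - f a * (g b - g a)\<bar> \<le>
             (\<Sum>k. ereal (2 ^ k * (if k = 0 then (SUP t\<in>{a..b}. \<bar>f t - f a\<bar>) else \<eta> (k - 1)))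
                        * truncated_variation g a b (\<theta> k))
              + (\<Sum>k. ereal (2 ^ k * \<theta> k) * truncated_variation f a b (\<eta> k))"
proof -
  define M where "M = (SUP t\<in>{a..b}. \<bar>f t - f a\<bar>)"
  have abl: "a \<le> b" using ab by simp
  obtain Bd where Bd: "\<forall>t\<in>{a..b}. \<bar>f t\<bar> \<le> Bd"
    using regulated_cover[OF reg_f abl zero_less_one] by (elim exE conjE) blast
  have bdd: "bdd_above ((\<lambda>t. \<bar>f t - f a\<bar>) ` {a..b})"
  proof -
    have "\<forall>t\<in>{a..b}. \<bar>f t - f a\<bar> \<le> 2 * Bd"
    proof
      fix t assume "t \<in> {a..b}"
      moreover have "a \<in> {a..b}" using ab by simp
      ultimately have "\<bar>f t\<bar> \<le> Bd" "\<bar>f a\<bar> \<le> Bd" using Bd by blast+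
      thus "\<bar>f t - f a\<bar> \<le> 2 * Bd" by linarith
    qed
    thus ?thesis by (auto intro: bdd_aboveI2)
  qed
  have Mb: "\<forall>t\<in>{a..b}. \<bar>f t - f a\<bar> \<le> M" unfolding M_def using bdd by (auto intro: cSUP_upper)
  have M0: "0 \<le> M" using Mb ab by force
  define ae where "ae k = ereal (2 ^ k * (if k = 0 then M else \<eta> (k - 1))) * truncated_variation g a b (\<theta> k)" for k
  define be where "be k = ereal (2 ^ k * \<theta> k) * truncated_variation f a b (\<eta> k)" for k
  have ae0: "\<forall>k. 0 \<le> ae k" unfolding ae_def using M0 eta_nonneg
    by (auto intro!: ereal_0_le_mult trunc_nonneg)
  have be0: "\<forall>k. 0 \<le> be k" unfolding be_def using theta_nonneg
    by (auto intro!: ereal_0_le_mult trunc_nonneg)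
  have S: "suminf ae + suminf be < \<infinity>" using S_fin unfolding ae_def be_def M_def .
  have sa0: "0 \<le> suminf ae" using suminf_upper[of ae 0] ae0 by simp
  have sb0: "0 \<le> suminf be" using suminf_upper[of be 0] be0 by simp
  have afin: "suminf ae \<noteq> \<infinity>" using S sa0 sb0 by auto
  have bfin: "suminf be \<noteq> \<infinity>" using S sa0 sb0 by auto
  define A where "A k = real_of_ereal (ae k)" for k
  define B where "B k = real_of_ereal (be k)" for k
  note Ar = ereal_series_real[OF ae0 afin]
  note Br = ereal_series_real[OF be0 bfin]
  have Asum: "summable A" using Ar(2) by (simp add: A_def[abs_def])
  have Bsum: "summable B" using Br(2) by (simp add: B_def[abs_def])
  have Acond: "\<forall>k. ereal (2 ^ k * (if k = 0 then M else \<eta> (k - 1))) * truncated_variation g a b (\<theta> k) \<le> ereal (A k)"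
    using Ar(1) unfolding A_def ae_def by (metis order_refl)
  have Bcond: "\<forall>k. ereal (2 ^ k * \<theta> k) * truncated_variation f a b (\<eta> k) \<le> ereal (B k)"
    using Br(1) unfolding B_def be_def by (metis order_refl)
  have Sreal: "suminf ae + suminf be = ereal (suminf A + suminf B)"
    using Ar(3) Br(3) by (simp add: A_def[abs_def] B_def[abs_def])
  have bound: "\<forall>l x \<nu>. ispart a b l x \<nu> \<longrightarrow> \<bar>RS f g l x \<nu> - f a * (g b - g a)\<bar> \<le> suminf A + suminf B"
    using core[OF _ Mb M0 eta_nonneg eta_mono eta_lim theta_nonneg theta_mono theta_lim Asum Acond Bsum Bcond] by blast
  have A2: "\<forall>k. 2 ^ k * (if k = 0 then M else \<eta> (k - 1)) * tvr g a b (\<theta> k) \<le> A k"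
  proof
    fix k
    have "0 \<le> 2 ^ k * (if k = 0 then M else \<eta> (k - 1))" using M0 eta_nonneg by simp
    from ereal_prod_bound(1)[OF this trunc_nonneg Acond[rule_format, of k]]
    show "2 ^ k * (if k = 0 then M else \<eta> (k - 1)) * tvr g a b (\<theta> k) \<le> A k" by (simp add: tvr_def)
  qed
  have B2: "\<forall>k. 2 ^ k * \<theta> k * tvr f a b (\<eta> k) \<le> B k"
  proof
    fix k
    have "0 \<le> 2 ^ k * \<theta> k" using theta_nonneg by simp
    from ereal_prod_bound(1)[OF this trunc_nonneg Bcond[rule_format, of k]]
    show "2 ^ k * \<theta> k * tvr f a b (\<eta> k) \<le> B k" by (simp add: tvr_def)
  qed
  have Afin: "0 < (if k = 0 then M else \<eta> (k - 1)) \<Longrightarrow> truncated_variation g a b (\<theta> k) \<noteq> \<infinity>" for k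
  proof -
    assume p: "0 < (if k = 0 then M else \<eta> (k - 1))"
    have "0 \<le> 2 ^ k * (if k = 0 then M else \<eta> (k - 1))" using M0 eta_nonneg by simp
    moreover have "0 < 2 ^ k * (if k = 0 then M else \<eta> (k - 1))" using p by simp
    ultimately show ?thesis using ereal_prod_bound(2)[OF _ trunc_nonneg Acond[rule_format, of k]] by blast
  qed
  have Bfin: "0 < \<theta> k \<Longrightarrow> truncated_variation f a b (\<eta> k) \<noteq> \<infinity>" for k
  proof -
    assume p: "0 < \<theta> k"
    have "0 \<le> 2 ^ k * \<theta> k" using theta_nonneg by simp
    moreover have "0 < 2 ^ k * \<theta> k" using p by simp
    ultimately show ?thesis using ereal_prod_bound(2)[OF _ trunc_nonneg Bcond[rule_format, of k]] by blast
  qed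
  have small: "\<exists>\<delta>>0. \<forall>l x \<nu>. ispart a b l x \<nu> \<longrightarrow> (\<forall>i<l. x (Suc i) - x i < \<delta>) \<longrightarrow>
     (\<exists>s. (\<forall>i L' y' \<mu>'. i < l \<longrightarrow> ispart (x i) (x (Suc i)) L' y' \<mu>' \<longrightarrow>
       \<bar>RS f g L' y' \<mu>' - f (x i) * (g (x (Suc i)) - g (x i))\<bar> \<le> s i) \<and> (\<Sum>i<l. s i) \<le> \<epsilon>)"
    if e: "0 < \<epsilon>" for \<epsilon>
  proof -
    have case23: ?thesis if e'0: "0 \<le> e'" and fin_f: "truncated_variation f a b e' \<noteq> \<infinity>"
      and fin_g: "0 < e' \<Longrightarrow> truncated_variation g a b 0 \<noteq> \<infinity>"
      and e'small: "2 * e' * tvr g a b 0 \<le> \<epsilon> / 3" for e'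
    proof -
      define \<tau> where "\<tau> = \<epsilon> / (3 * (tvr f a b e' + 1))"
      have tau: "0 < \<tau>" using e tvr_nonneg[of f a b e'] by (simp add: \<tau>_def)
      have taus: "\<tau> * tvr f a b e' \<le> \<epsilon> / 3"
      proof -
        have "\<tau> * tvr f a b e' \<le> \<tau> * (tvr f a b e' + 1)" using tau by simp
        also have "\<dots> = \<epsilon> / 3" unfolding \<tau>_def by (rule frac_cancel[OF tvr_nonneg]) simp
        finally show ?thesis .
      qed
      define \<epsilon>0 where "\<epsilon>0 = \<epsilon> / (3 * (tvr g a b \<tau> + 1))"
      have e0: "0 < \<epsilon>0" using e tvr_nonneg[of g a b \<tau>] by (simp add: \<epsilon>0_def)
      have e0s: "\<epsilon>0 * tvr g a b \<tau> \<le> \<epsilon> / 3"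
      proof -
        have "\<epsilon>0 * tvr g a b \<tau> \<le> \<epsilon>0 * (tvr g a b \<tau> + 1)" using e0 by simp
        also have "\<dots> = \<epsilon> / 3" unfolding \<epsilon>0_def by (rule frac_cancel[OF tvr_nonneg]) simp
        finally show ?thesis .
      qed
      obtain \<delta> where \<delta>: "\<delta> > 0" "\<forall>c d. a \<le> c \<longrightarrow> c \<le> d \<longrightarrow> d \<le> b \<longrightarrow> d - c < \<delta> \<longrightarrow>
          (\<forall>s\<in>{c..d}. \<forall>t\<in>{c..d}. \<bar>f s - f t\<bar> \<le> \<epsilon>0) \<or> truncated_variation g c d \<tau> = 0"
        using goodbad[OF reg_f abl no_common e0 tau] by blast
      show ?thesis
      proof (rule exI[of _ \<delta>], intro conjI allI impI)
        show "0 < \<delta>" by (rule \<delta>(1))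
        fix l x \<nu> assume P: "ispart a b l x \<nu>" and m: "\<forall>i<l. x (Suc i) - x i < \<delta>"
        obtain s where s: "\<forall>i L' y' \<mu>'. i < l \<longrightarrow> ispart (x i) (x (Suc i)) L' y' \<mu>' \<longrightarrow>
            \<bar>RS f g L' y' \<mu>' - f (x i) * (g (x (Suc i)) - g (x i))\<bar> \<le> s i"
          "(\<Sum>i<l. s i) \<le> \<epsilon>0 * tvr g a b \<tau> + 2 * e' * tvr g a b 0 + \<tau> * tvr f a b e'"
          using small23[OF ab reg_g Mb M0 e'0 fin_f fin_g tau e0 \<delta>(2) P m] by blast
        show "\<exists>s. (\<forall>i L' y' \<mu>'. i < l \<longrightarrow> ispart (x i) (x (Suc i)) L' y' \<mu>' \<longrightarrow>
            \<bar>RS f g L' y' \<mu>' - f (x i) * (g (x (Suc i)) - g (x i))\<bar> \<le> s i) \<and> (\<Sum>i<l. s i) \<le> \<epsilon>"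
        proof (rule exI[of _ s], rule conjI)
          show "\<forall>i L' y' \<mu>'. i < l \<longrightarrow> ispart (x i) (x (Suc i)) L' y' \<mu>' \<longrightarrow>
            \<bar>RS f g L' y' \<mu>' - f (x i) * (g (x (Suc i)) - g (x i))\<bar> \<le> s i" by (rule s(1))
          show "(\<Sum>i<l. s i) \<le> \<epsilon>" using s(2) e0s taus e'small by linarith
        qed
      qed
    qed
    show ?thesis
    proof (cases "total_variation f a b \<noteq> \<infinity>")
      case True
      show ?thesis by (rule case23[of 0]) (use True e in \<open>auto simp: trunc_zero\<close>)
    next
      case nf: False
      show ?thesis
      proof (cases "total_variation g a b \<noteq> \<infinity>")
        case True
        define e' where "e' = (\<epsilon> / 6) / (1 * (tvr g a b 0 + 1))"
        have e'p: "0 < e'" using e tvr_nonneg[of g a b 0] by (simp add: e'_def)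
        have e's: "2 * e' * tvr g a b 0 \<le> \<epsilon> / 3"
        proof -
          have "2 * e' * tvr g a b 0 \<le> 2 * e' * (tvr g a b 0 + 1)" using e'p by simp
          also have "\<dots> = 2 * (e' * (tvr g a b 0 + 1))" by simp
          also have "e' * (tvr g a b 0 + 1) = (\<epsilon> / 6) / 1" unfolding e'_def by (rule frac_cancel[OF tvr_nonneg]) simp
          finally show ?thesis by simp
        qed
        show ?thesis
          by (rule case23[OF less_imp_le[OF e'p] trunc_finite[OF reg_f abl e'p] _ e's])
            (use True in \<open>simp add: trunc_zero\<close>)
      next
        case ng: False
        have tvg: "truncated_variation g a b 0 = \<infinity>" using ng by (simp add: trunc_zero)
        have tvf: "truncated_variation f a b 0 = \<infinity>" using nf by (simp add: trunc_zero)
        have Mpos: "0 < M"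
        proof (rule ccontr)
          assume "\<not> 0 < M"
          hence M00: "M = 0" using M0 by simp
          have fc: "f t = f a" if "a \<le> t" "t \<le> b" for t
          proof -
            have "t \<in> {a..b}" using that by simp
            hence "\<bar>f t - f a\<bar> \<le> M" using Mb by blast
            thus ?thesis using M00 by simp
          qed
          have "total_variation f a b = total_variation (\<lambda>_. f a) a b" by (rule tv_cong) (rule fc; assumption)
          thus False using nf tv_const by simp
        qed
        have tpos1: "0 < \<theta> k" for k
        proof (induction k)
          case 0
          show ?case
          proof (rule ccontr)
            assume "\<not> 0 < \<theta> 0"
            hence t0: "\<theta> 0 = 0" using theta_nonneg[rule_format, of 0] by linarith
            have "truncated_variation g a b (\<theta> 0) = \<infinity>" using tvg t0 by simp
            moreover have "truncated_variation g a b (\<theta> 0) \<noteq> \<infinity>" using Afin[of 0] Mpos by simp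
            ultimately show False by simp
          qed
        next
          case (Suc k)
          show ?case
          proof (rule ccontr)
            assume "\<not> 0 < \<theta> (Suc k)"
            hence t0: "\<theta> (Suc k) = 0" using theta_nonneg[rule_format, of "Suc k"] by linarith
            have "truncated_variation g a b (\<theta> (Suc k)) = \<infinity>" using tvg t0 by simp
            hence "\<not> 0 < \<eta> k" using Afin[of "Suc k"] by auto
            hence "\<eta> k = 0" using eta_nonneg[rule_format, of k] by linarith
            hence "truncated_variation f a b (\<eta> k) = \<infinity>" using tvf by simp
            thus False using Bfin[OF Suc.IH] by simp
          qed
        qed
        have tpos: "\<forall>k. 0 < \<theta> k" using tpos1 by blast
        have Bfin': "\<forall>k. truncated_variation f a b (\<eta> k) \<noteq> \<infinity>" using Bfin tpos by blast
        have e8: "0 < \<epsilon> / 4" using e by simp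
        obtain N0 where N0: "\<forall>n\<ge>N0. (\<Sum>k. A (k + n)) < \<epsilon> / 4" using tail_small[OF Asum e8] by blast
        obtain N1 where N1: "\<forall>n\<ge>N1. (\<Sum>k. B (k + n)) < \<epsilon> / 4" using tail_small[OF Bsum e8] by blast
        define N where "N = N0 + N1"
        have "N0 \<le> Suc N" "N1 \<le> N" by (simp_all add: N_def)
        hence tA: "(\<Sum>k. A (k + Suc N)) < \<epsilon> / 4" and tB: "(\<Sum>k. B (k + N)) < \<epsilon> / 4"
          using N0 N1 by blast+
        define \<epsilon>0 where "\<epsilon>0 = \<epsilon> / (4 * (tvr g a b (\<theta> N) + 1))"
        have e0: "0 < \<epsilon>0" using e tvr_nonneg[of g a b "\<theta> N"] by (simp add: \<epsilon>0_def)
        have e0s: "\<epsilon>0 * tvr g a b (\<theta> N) \<le> \<epsilon> / 4"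
        proof -
          have "\<epsilon>0 * tvr g a b (\<theta> N) \<le> \<epsilon>0 * (tvr g a b (\<theta> N) + 1)" using e0 by simp
          also have "\<dots> = \<epsilon> / 4" unfolding \<epsilon>0_def by (rule frac_cancel[OF tvr_nonneg]) simp
          finally show ?thesis .
        qed
        obtain \<delta> where \<delta>: "\<delta> > 0" "\<forall>c d. a \<le> c \<longrightarrow> c \<le> d \<longrightarrow> d \<le> b \<longrightarrow> d - c < \<delta> \<longrightarrow>
            (\<forall>s\<in>{c..d}. \<forall>t\<in>{c..d}. \<bar>f s - f t\<bar> \<le> \<epsilon>0) \<or> truncated_variation g c d (\<theta> N) = 0"
          using goodbad[OF reg_f abl no_common e0 tpos[rule_format, of N]] by blast
        show ?thesis
        proof (rule exI[of _ \<delta>], intro conjI allI impI)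
          show "0 < \<delta>" by (rule \<delta>(1))
          fix l x \<nu> assume P: "ispart a b l x \<nu>" and m: "\<forall>i<l. x (Suc i) - x i < \<delta>"
          obtain s where s: "\<forall>i L' y' \<mu>'. i < l \<longrightarrow> ispart (x i) (x (Suc i)) L' y' \<mu>' \<longrightarrow>
              \<bar>RS f g L' y' \<mu>' - f (x i) * (g (x (Suc i)) - g (x i))\<bar> \<le> s i"
            "(\<Sum>i<l. s i) \<le> \<epsilon>0 * tvr g a b (\<theta> N) + (\<Sum>k. A (k + Suc N)) + (\<Sum>k. B (k + N))"
            using small1[OF ab reg_g Mb M0 eta_nonneg eta_mono eta_lim theta_nonneg theta_mono theta_lim
                tpos A2 Asum Bfin' B2 Bsum e0 \<delta>(2) P m] by blast
          show "\<exists>s. (\<forall>i L' y' \<mu>'. i < l \<longrightarrow> ispart (x i) (x (Suc i)) L' y' \<mu>' \<longrightarrow>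
              \<bar>RS f g L' y' \<mu>' - f (x i) * (g (x (Suc i)) - g (x i))\<bar> \<le> s i) \<and> (\<Sum>i<l. s i) \<le> \<epsilon>"
          proof (rule exI[of _ s], rule conjI)
            show "\<forall>i L' y' \<mu>'. i < l \<longrightarrow> ispart (x i) (x (Suc i)) L' y' \<mu>' \<longrightarrow>
              \<bar>RS f g L' y' \<mu>' - f (x i) * (g (x (Suc i)) - g (x i))\<bar> \<le> s i" by (rule s(1))
            show "(\<Sum>i<l. s i) \<le> \<epsilon>" using s(2) e0s tA tB e by linarith
          qed
        qed
      qed
    qed
  qed
  have C: "\<exists>\<delta>>0. \<forall>l x \<nu> l' x' \<nu>'. ispart a b l x \<nu> \<longrightarrow> (\<forall>i<l. x (Suc i) - x i < \<delta>) \<longrightarrow>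
        ispart a b l' x' \<nu>' \<longrightarrow> (\<forall>i<l'. x' (Suc i) - x' i < \<delta>) \<longrightarrow> \<bar>RS f g l x \<nu> - RS f g l' x' \<nu>'\<bar> \<le> \<epsilon>"
    if "0 < \<epsilon>" for \<epsilon>
    by (rule cauchy_from_small[OF small that])
  obtain I where I: "RS_has_integral f g a b I" "\<bar>I - f a * (g b - g a)\<bar> \<le> suminf A + suminf B"
    using RS_integral_from_cauchy[OF ab C bound] by blast
  have "ereal \<bar>I - f a * (g b - g a)\<bar> \<le> suminf ae + suminf be" using I(2) Sreal by simp
  thus ?thesis using I(1) unfolding ae_def be_def M_def by blast
qed

end
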